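(* Let $\Bbbk$ be an algebraically closed field of characteristic $p>2$, and let $\Psi_\Bbbk:Y_2^>(\Bbbk)\to W^{(2)}(\Bbbk)$ be the $\Bbbk$-algebra homomorphism with $e_r\mapsto x_1^r$. For every $k\in\mathbb{N}$, $$\mathrm{im}(\Psi_\Bbbk)\cap W^{(2)}_k(\Bbbk)\subset J_k:=\{f\in\Bbbk[x_1,\dots,x_k]^{\Sigma_k}:\ f=0 \text{ whenever } x_1=x_2+1=\dots=x_p+p-1\}$$ (for $k<p$ the condition is vacuous and $J_k=\Bbbk[x_1,\dots,x_k]^{\Sigma_k}$).
   Context: $\mathbb{N}=\{0,1,\dots\}$; $\frac12$ denotes the inverse of $2$ in $\Bbbk$. $Y_2^>(\Bbbk)$ is the $\Bbbk$-algebra generated by $e_r$ ($r\in\mathbb{N}$) with relations $[e_{r+1},e_s]-[e_r,e_{s+1}]=e_re_s+e_se_r$. $W^{(2)}(\Bbbk)=\bigoplus_{k\in\mathbb{N}}W^{(2)}_k(\Bbbk)$ with $W^{(2)}_k(\Bbbk)=\Bbbk[x_1,\dots,x_k]^{\Sigma_k}$, and product: for $F\in W_k$, $G\in W_\ell$, $F\star G=\sum_{\sigma}\sigma\big(F(x_1,\dots,x_k)G(x_{k+1},\dots,x_{k+\ell})\prod_{r\le k<r'}\frac{x_r-x_{r'}+1}{x_r-x_{r'}}\big)$, summing over $\sigma\in\Sigma_{k+\ell}$ with $\sigma(1)<\dots<\sigma(k)$ and $\sigma(k+1)<\dots<\sigma(k+\ell)$, acting by $x_r\mapsto x_{\sigma(r)}$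 (the result is a symmetric polynomial). *)

theory Defs
  imports "HOL-Computational_Algebra.Polynomial" "HOL-Library.Poly_Mapping"
    "HOL-Combinatorics.Permutations"
begin

text \<open>Multivariate polynomials over a field: finitely supported maps from
  monomials (exponent vectors, variable i stands for x_(i+1)) to coefficients.\<close>
type_synonym 'a mpoly = "(nat \<Rightarrow>\<^sub>0 nat) \<Rightarrow>\<^sub>0 'a"

definition mp_eval :: "'a::comm_ring_1 mpoly \<Rightarrow> (nat \<Rightarrow> 'a) \<Rightarrow> 'a" where
  "mp_eval f a = (\<Sum>m\<in>Poly_Mapping.keys f. Poly_Mapping.lookup f m * (\<Prod>i\<in>Poly_Mapping.keys m. a i ^ Poly_Mapping.lookup m i))"

definition mp_const :: "'a::zero \<Rightarrow> 'a mpoly" where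
  "mp_const c = Poly_Mapping.single 0 c"

definition mp_x0pow :: "nat \<Rightarrow> 'a::{zero,one} mpoly" where
  "mp_x0pow r = Poly_Mapping.single (Poly_Mapping.single 0 r) 1"

text \<open>W_k: symmetric polynomials in the variables x_1..x_k (indices 0..k-1).
  The permutation \<sigma> sends x_i to x_(\<sigma> i), so the monomial m goes to m'
  with m'(\<sigma> i) = m i.\<close>
definition Wk :: "nat \<Rightarrow> 'a::comm_ring_1 mpoly set" where
  "Wk k = {f. (\<forall>m\<in>Poly_Mapping.keys f. Poly_Mapping.keys m \<subseteq> {..<k}) \<and>
     (\<forall>\<sigma>. \<sigma> permutes {..<k} \<longrightarrow>
        (\<forall>m m'. (\<forall>i. Poly_Mapping.lookup m' (\<sigma> i) = Poly_Mapping.lookup m i) \<longrightarrow> Poly_Mapping.lookup f m' = Poly_Mapping.lookup f m))}"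

definition shuffles :: "nat \<Rightarrow> nat \<Rightarrow> (nat \<Rightarrow> nat) set" where
  "shuffles k l = {\<sigma>. \<sigma> permutes {..<k+l} \<and> strict_mono_on {..<k} \<sigma>
                        \<and> strict_mono_on {k..<k+l} \<sigma>}"

text \<open>The shuffle product F \<star> G of F \<in> W_k, G \<in> W_l: the (unique) element of
  W_(k+l) which agrees with the defining rational expression at every point
  where the denominators x_r - x_r' do not vanish (all coordinates distinct).\<close>
definition star :: "nat \<Rightarrow> nat \<Rightarrow> 'a::field mpoly \<Rightarrow> 'a mpoly \<Rightarrow> 'a mpoly" where
  "star k l F G = (THE H. H \<in> Wk (k+l) \<and>
     (\<forall>a. inj_on a {..<k+l} \<longrightarrow>
        mp_eval H a = (\<Sum>\<sigma>\<in>shuffles k l.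
           mp_eval F (\<lambda>i. a (\<sigma> i)) * mp_eval G (\<lambda>i. a (\<sigma> (i + k))) *
           (\<Prod>r<k. \<Prod>r'\<in>{k..<k+l}.
              (a (\<sigma> r) - a (\<sigma> r') + 1) / (a (\<sigma> r) - a (\<sigma> r'))))))"

text \<open>Elements of W = \<Oplus>_k W_k, as graded families with finite support.\<close>
definition Wtot :: "(nat \<Rightarrow> 'a::comm_ring_1 mpoly) set" where
  "Wtot = {w. (\<forall>k. w k \<in> Wk k) \<and> finite {k. w k \<noteq> 0}}"

definition Wmult :: "(nat \<Rightarrow> 'a::field mpoly) \<Rightarrow> (nat \<Rightarrow> 'a mpoly) \<Rightarrow> nat \<Rightarrow> 'a mpoly" where
  "Wmult w v n = (\<Sum>k\<le>n. star k (n - k) (w k) (v (n - k)))"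

definition Wone :: "nat \<Rightarrow> 'a::field mpoly" where
  "Wone n = (if n = 0 then mp_const 1 else 0)"

definition Wscale :: "'a::field \<Rightarrow> (nat \<Rightarrow> 'a mpoly) \<Rightarrow> nat \<Rightarrow> 'a mpoly" where
  "Wscale c w n = Poly_Mapping.map ((*) c) (w n)"

text \<open>\<Psi>(e_r) = x_1^r \<in> W_1.\<close>
definition Psi_gen :: "nat \<Rightarrow> nat \<Rightarrow> 'a::field mpoly" where
  "Psi_gen r n = (if n = 1 then mp_x0pow r else 0)"

text \<open>The image of the algebra homomorphism \<Psi> is the subalgebra of W generated
  by the images \<Psi>(e_r) of the generators e_r.\<close>
inductive_set imPsi :: "(nat \<Rightarrow> 'a::field mpoly) set" where
  gen: "Psi_gen r \<in> imPsi"
| one: "Wone \<in> imPsi"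
| add: "w \<in> imPsi \<Longrightarrow> v \<in> imPsi \<Longrightarrow> (\<lambda>n. w n + v n) \<in> imPsi"
| scale: "w \<in> imPsi \<Longrightarrow> Wscale c w \<in> imPsi"
| mult: "w \<in> imPsi \<Longrightarrow> v \<in> imPsi \<Longrightarrow> Wmult w v \<in> imPsi"

definition Jk :: "nat \<Rightarrow> nat \<Rightarrow> 'a::field mpoly set" where
  "Jk p k = {f \<in> Wk k. p \<le> k \<longrightarrow>
      (\<forall>a. (\<forall>i<p. a i + of_nat i = a 0) \<longrightarrow> mp_eval f a = 0)}"

end

theory Submission
  imports Defs
begin
definition monval :: "(nat \<Rightarrow>\<^sub>0 nat) \<Rightarrow> (nat \<Rightarrow> 'a::comm_ring_1) \<Rightarrow> 'a" where
  "monval m a = (\<Prod>i\<in>Poly_Mapping.keys m. a i ^ Poly_Mapping.lookup m i)"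

definition keys_in :: "nat \<Rightarrow> 'a::zero mpoly \<Rightarrow> bool" where
  "keys_in n H \<longleftrightarrow> (\<forall>m\<in>Poly_Mapping.keys H. Poly_Mapping.keys m \<subseteq> {..<n})"

lemma monval_superset:
  assumes "finite S" "Poly_Mapping.keys m \<subseteq> S"
  shows "monval m a = (\<Prod>i\<in>S. a i ^ Poly_Mapping.lookup m i)"
  unfolding monval_def
  by (rule prod.mono_neutral_left[OF assms(1,2)]) (auto simp: in_keys_iff)

lemma mp_eval_monval: "mp_eval f a = (\<Sum>m\<in>Poly_Mapping.keys f. Poly_Mapping.lookup f m * monval m a)"
  by (simp add: mp_eval_def monval_def)

lemma mp_eval_superset:
  assumes "finite S" "Poly_Mapping.keys f \<subseteq> S"
  shows "mp_eval f a = (\<Sum>m\<in>S. Poly_Mapping.lookup f m * monval m a)"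
  unfolding mp_eval_monval
  by (rule sum.mono_neutral_left[OF assms]) (auto simp: in_keys_iff)

lemma monval_zero [simp]: "monval 0 a = 1"
  by (simp add: monval_def)

lemma monval_single1 [simp]: "monval (Poly_Mapping.single i 1) a = a i"
  by (simp add: monval_def)

lemma monval_add: "monval (m + m') a = monval m a * monval m' a"
proof -
  let ?S = "Poly_Mapping.keys m \<union> Poly_Mapping.keys m'"
  have "monval (m + m') a = (\<Prod>i\<in>?S. a i ^ Poly_Mapping.lookup (m + m') i)"
    by (rule monval_superset) (auto simp: keys_add)
  also have "\<dots> = (\<Prod>i\<in>?S. a i ^ Poly_Mapping.lookup m i * a i ^ Poly_Mapping.lookup m' i)"
    by (simp add: lookup_add power_add)
  also have "\<dots> = monval m a * monval m' a"
    by (simp add: prod.distrib monval_superset[of ?S])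
  finally show ?thesis .
qed

lemma mp_eval_single: "mp_eval (Poly_Mapping.single m c) a = c * monval m a"
  by (subst mp_eval_superset[of "{m}"]) auto

lemma mp_eval_zero [simp]: "mp_eval 0 a = 0"
  by (simp add: mp_eval_def)

lemma mp_eval_add: "mp_eval (f + g) a = mp_eval f a + mp_eval g a"
proof -
  let ?S = "Poly_Mapping.keys f \<union> Poly_Mapping.keys g"
  have "mp_eval (f + g) a = (\<Sum>m\<in>?S. Poly_Mapping.lookup (f + g) m * monval m a)"
    by (rule mp_eval_superset) (auto simp: keys_add)
  also have "\<dots> = (\<Sum>m\<in>?S. Poly_Mapping.lookup f m * monval m a) + (\<Sum>m\<in>?S. Poly_Mapping.lookup g m * monval m a)"
    by (simp add: lookup_add distrib_right sum.distrib)
  also have "\<dots> = mp_eval f a + mp_eval g a"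
    by (simp add: mp_eval_superset[of ?S])
  finally show ?thesis .
qed

lemma keys_diff_sub: "Poly_Mapping.keys (f - g) \<subseteq> Poly_Mapping.keys f \<union> Poly_Mapping.keys (g::'b \<Rightarrow>\<^sub>0 'a::ab_group_add)"
  by (auto simp: in_keys_iff lookup_minus)

lemma mp_eval_diff: "mp_eval (f - g) a = mp_eval f a - mp_eval g a"
proof -
  let ?S = "Poly_Mapping.keys f \<union> Poly_Mapping.keys g"
  have "mp_eval (f - g) a = (\<Sum>m\<in>?S. Poly_Mapping.lookup (f - g) m * monval m a)"
    by (rule mp_eval_superset) (simp, use keys_diff_sub[of f g] in blast)
  also have "\<dots> = (\<Sum>m\<in>?S. Poly_Mapping.lookup f m * monval m a) - (\<Sum>m\<in>?S. Poly_Mapping.lookup g m * monval m a)"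
    by (simp add: lookup_minus left_diff_distrib sum_subtractf)
  also have "\<dots> = mp_eval f a - mp_eval g a"
    by (simp add: mp_eval_superset[of ?S])
  finally show ?thesis .
qed

lemma keys_sum_sub: "Poly_Mapping.keys (sum b I) \<subseteq> (\<Union>i\<in>I. Poly_Mapping.keys (b i))"
proof (induction I rule: infinite_finite_induct)
  case (insert x F)
  then show ?case using keys_add[of "b x" "sum b F"] by auto
qed auto

lemma mp_eval_sum_single:
  assumes "finite J"
  shows "mp_eval (\<Sum>j\<in>J. Poly_Mapping.single (m j) (c j)) a = (\<Sum>j\<in>J. c j * monval (m j) a)"
proof -
  have "mp_eval (\<Sum>j\<in>J. Poly_Mapping.single (m j) (c j)) a =
    (\<Sum>u\<in>m ` J. Poly_Mapping.lookup (\<Sum>j\<in>J. Poly_Mapping.single (m j) (c j)) u * monval u a)"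
  proof (rule mp_eval_superset)
    show "finite (m ` J)" using assms by simp
    have "Poly_Mapping.keys (\<Sum>j\<in>J. Poly_Mapping.single (m j) (c j)) \<subseteq> (\<Union>j\<in>J. Poly_Mapping.keys (Poly_Mapping.single (m j) (c j)))"
      by (rule keys_sum_sub)
    also have "\<dots> \<subseteq> m ` J" by auto
    finally show "Poly_Mapping.keys (\<Sum>j\<in>J. Poly_Mapping.single (m j) (c j)) \<subseteq> m ` J" .
  qed
  also have "\<dots> = (\<Sum>u\<in>m ` J. \<Sum>j\<in>J. (if m j = u then c j * monval u a else 0))"
  proof (rule sum.cong[OF refl])
    fix u
    show "Poly_Mapping.lookup (\<Sum>j\<in>J. Poly_Mapping.single (m j) (c j)) u * monval u a = (\<Sum>j\<in>J. (if m j = u then c j * monval u a else 0))"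
      unfolding lookup_sum sum_distrib_right lookup_single by (intro sum.cong refl) (simp add: when_def)
  qed
  also have "\<dots> = (\<Sum>j\<in>J. \<Sum>u\<in>m ` J. (if m j = u then c j * monval u a else 0))"
    by (rule sum.swap)
  also have "\<dots> = (\<Sum>j\<in>J. c j * monval (m j) a)"
    using assms by (simp add: sum.delta)
  finally show ?thesis .
qed

subsection \<open>Identity theorem\<close>

lemma digits_unique:
  fixes N :: nat
  assumes "\<forall>i<n. d i < N" "\<forall>i<n. e i < N"
    "(\<Sum>i<n. d i * N ^ i) = (\<Sum>i<n. e i * N ^ i)"
  shows "\<forall>i<n. d i = e i"
  using assms
proof (induction n arbitrary: d e)
  case 0 then show ?case by simp
next
  case (Suc n)
  have split: "(\<Sum>i<Suc n. f i * N ^ i) = f 0 + N * (\<Sum>i<n. f (Suc i) * N ^ i)" for f :: "nat \<Rightarrow> nat"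
    by (subst sum.lessThan_Suc_shift) (simp add: sum_distrib_left mult_ac)
  have eq: "d 0 + N * (\<Sum>i<n. d (Suc i) * N ^ i) = e 0 + N * (\<Sum>i<n. e (Suc i) * N ^ i)"
    using Suc.prems(3) by (simp only: split)
  have d0: "d 0 < N" "e 0 < N" using Suc.prems by auto
  then have N: "N > 0" by auto
  have h0: "d 0 = e 0"
    using arg_cong[OF eq, of "\<lambda>x. x mod N"] d0 by simp
  have hr: "(\<Sum>i<n. d (Suc i) * N ^ i) = (\<Sum>i<n. e (Suc i) * N ^ i)"
    using eq h0 N by simp
  have "\<forall>i<n. d (Suc i) = e (Suc i)"
    using Suc.IH[of "\<lambda>i. d (Suc i)" "\<lambda>i. e (Suc i)"] Suc.prems hr by auto
  then show ?case using h0 by (auto simp: less_Suc_eq_0_disj)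
qed

lemma infinite_field_poly_zero:
  assumes "infinite (UNIV :: 'a::field set)" "\<forall>t. poly p t = (0::'a)"
  shows "p = 0"
proof (rule ccontr)
  assume "p \<noteq> 0"
  then have "finite {t. poly p t = 0}" by (rule poly_roots_finite)
  with assms show False by simp
qed

lemma mp_identity:
  fixes H :: "'a::field mpoly"
  assumes inf: "infinite (UNIV::'a set)" and kn: "keys_in n H" and z: "\<forall>a. mp_eval H a = 0"
  shows "H = 0"
proof -
  define N where "N = Suc (\<Sum>m\<in>Poly_Mapping.keys H. \<Sum>i<n. Poly_Mapping.lookup m i)"
  have bound: "Poly_Mapping.lookup m i < N" if "m \<in> Poly_Mapping.keys H" "i < n" for m i
  proof -
    have "Poly_Mapping.lookup m i \<le> (\<Sum>i<n. Poly_Mapping.lookup m i)"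
      using that(2) by (intro member_le_sum) auto
    also have "\<dots> \<le> (\<Sum>m\<in>Poly_Mapping.keys H. \<Sum>i<n. Poly_Mapping.lookup m i)"
      using that(1) by (intro member_le_sum) auto
    finally show ?thesis unfolding N_def by simp
  qed
  define enc where "enc m = (\<Sum>i<n. Poly_Mapping.lookup m i * N ^ i)" for m :: "nat \<Rightarrow>\<^sub>0 nat"
  have inj: "inj_on enc (Poly_Mapping.keys H)"
  proof (rule inj_onI)
    fix m m' assume mm: "m \<in> Poly_Mapping.keys H" "m' \<in> Poly_Mapping.keys H" "enc m = enc m'"
    have A: "\<forall>i<n. Poly_Mapping.lookup m i = Poly_Mapping.lookup m' i"
      by (rule digits_unique[of n _ N]) (use mm bound in \<open>auto simp: enc_def\<close>)
    have K: "Poly_Mapping.keys m \<subseteq> {..<n}" "Poly_Mapping.keys m' \<subseteq> {..<n}"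
      using kn mm unfolding keys_in_def by auto
    have B: "Poly_Mapping.lookup m i = 0" "Poly_Mapping.lookup m' i = 0" if "\<not> i < n" for i
      using K that by (meson lessThan_iff not_in_keys_iff_lookup_eq_zero subsetD)+
    show "m = m'" by (rule poly_mapping_eqI) (metis A B)
  qed
  define P where "P = (\<Sum>m\<in>Poly_Mapping.keys H. monom (Poly_Mapping.lookup H m) (enc m))"
  have mv: "monval m (\<lambda>i. t ^ (N ^ i)) = t ^ enc m" if "m \<in> Poly_Mapping.keys H" for m and t :: 'a
  proof -
    have "monval m (\<lambda>i. t ^ (N ^ i)) = (\<Prod>i<n. (t ^ (N ^ i)) ^ Poly_Mapping.lookup m i)"
      using kn that unfolding keys_in_def by (intro monval_superset) auto
    also have "\<dots> = (\<Prod>i<n. t ^ (Poly_Mapping.lookup m i * N ^ i))"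
      by (simp add: power_mult[symmetric] mult.commute)
    also have "\<dots> = t ^ enc m" by (simp add: enc_def power_sum)
    finally show ?thesis .
  qed
  have "poly P t = 0" for t
  proof -
    have "poly P t = (\<Sum>m\<in>Poly_Mapping.keys H. Poly_Mapping.lookup H m * t ^ enc m)"
      by (simp add: P_def poly_sum poly_monom)
    also have "\<dots> = mp_eval H (\<lambda>i. t ^ (N ^ i))"
      unfolding mp_eval_monval by (rule sum.cong) (auto simp: mv)
    finally show ?thesis using z by simp
  qed
  then have P0: "P = 0" using inf infinite_field_poly_zero by blast
  have "Poly_Mapping.lookup H m = 0" if "m \<in> Poly_Mapping.keys H" for m
  proof -
    have "coeff P (enc m) = (\<Sum>m'\<in>Poly_Mapping.keys H. if enc m' = enc m then Poly_Mapping.lookup H m' else 0)"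
      by (simp add: P_def coeff_sum coeff_monom)
    also have "\<dots> = (\<Sum>m'\<in>Poly_Mapping.keys H. if m' = m then Poly_Mapping.lookup H m' else 0)"
      using inj that by (intro sum.cong) (auto dest: inj_onD)
    also have "\<dots> = Poly_Mapping.lookup H m" using that by simp
    finally show ?thesis using P0 by simp
  qed
  then show "H = 0"
    by (intro poly_mapping_eqI) (metis lookup_zero not_in_keys_iff_lookup_eq_zero)
qed

inductive polyfun :: "nat \<Rightarrow> ((nat \<Rightarrow> 'a::comm_ring_1) \<Rightarrow> 'a) \<Rightarrow> bool" for n where
  pf_const: "polyfun n (\<lambda>a. c)"
| pf_var: "i < n \<Longrightarrow> polyfun n (\<lambda>a. a i)"
| pf_add: "polyfun n f \<Longrightarrow> polyfun n g \<Longrightarrow> polyfun n (\<lambda>a. f a + g a)"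
| pf_mult: "polyfun n f \<Longrightarrow> polyfun n g \<Longrightarrow> polyfun n (\<lambda>a. f a * g a)"

lemma pf_cong: "polyfun n f \<Longrightarrow> (\<And>a. f a = g a) \<Longrightarrow> polyfun n g"
proof -
  assume "polyfun n f" "\<And>a. f a = g a"
  then have "f = g" by auto
  with \<open>polyfun n f\<close> show ?thesis by simp
qed

lemma pf_sum: "(\<And>x. x \<in> X \<Longrightarrow> polyfun n (f x)) \<Longrightarrow> polyfun n (\<lambda>a. \<Sum>x\<in>X. f x a)"
proof (induction X rule: infinite_finite_induct)
  case (infinite A) then show ?case using pf_const[of n 0] by simp
next
  case empty then show ?case using pf_const[of n 0] by simp
next
  case (insert x F) then show ?case by (simp add: pf_add)
qed

lemma pf_prod: "(\<And>x. x \<in> X \<Longrightarrow> polyfun n (f x)) \<Longrightarrow> polyfun n (\<lambda>a. \<Prod>x\<in>X. f x a)"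
proof (induction X rule: infinite_finite_induct)
  case (infinite A) then show ?case using pf_const[of n 1] by simp
next
  case empty then show ?case using pf_const[of n 1] by simp
next
  case (insert x F) then show ?case by (simp add: pf_mult)
qed

lemma pf_power: "polyfun n f \<Longrightarrow> polyfun n (\<lambda>a. f a ^ k)"
proof (induction k)
  case 0 then show ?case using pf_const[of n 1] by simp
next
  case (Suc k) then show ?case using pf_mult[of n f "\<lambda>a. f a ^ k"] by simp
qed

lemma pf_neg: "polyfun n f \<Longrightarrow> polyfun n (\<lambda>a. - f a)"
  using pf_mult[OF pf_const[of n "-1"]] by simp

lemma pf_diff: "polyfun n f \<Longrightarrow> polyfun n g \<Longrightarrow> polyfun n (\<lambda>a. f a - g a)"
  using pf_add[of n f "\<lambda>a. - g a"] pf_neg[of n g] by simp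

lemma pf_mono: "polyfun n f \<Longrightarrow> n \<le> n' \<Longrightarrow> polyfun n' f"
  by (induction rule: polyfun.induct) (auto intro: polyfun.intros)

lemma pf_comp: "polyfun n f \<Longrightarrow> (\<And>i. i < n \<Longrightarrow> polyfun n' (\<lambda>a. h a i)) \<Longrightarrow> polyfun n' (\<lambda>a. f (h a))"
  by (induction rule: polyfun.induct) (auto intro: polyfun.intros)

lemma pf_local: "polyfun n f \<Longrightarrow> (\<And>i. i < n \<Longrightarrow> a i = b i) \<Longrightarrow> f a = f b"
  by (induction rule: polyfun.induct) auto

lemma mp_eval_polyfun:
  assumes "keys_in n H"
  shows "polyfun n (mp_eval H)"
proof -
  have "polyfun n (\<lambda>a. \<Sum>m\<in>Poly_Mapping.keys H. Poly_Mapping.lookup H m * monval m a)"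
  proof (intro pf_sum pf_mult pf_const)
    fix m assume m: "m \<in> Poly_Mapping.keys H"
    show "polyfun n (monval m)"
      unfolding monval_def
    proof (intro pf_prod pf_power pf_var)
      fix i assume "i \<in> Poly_Mapping.keys m"
      then show "i < n" using assms m unfolding keys_in_def by auto
    qed
  qed
  then show ?thesis by (rule pf_cong) (simp add: mp_eval_monval)
qed

definition rep :: "nat \<Rightarrow> ((nat \<Rightarrow> 'a::comm_ring_1) \<Rightarrow> 'a) \<Rightarrow> bool" where
  "rep n f \<longleftrightarrow> (\<exists>H. keys_in n H \<and> (\<forall>a. f a = mp_eval H a))"

lemma polyfun_rep: "polyfun n f \<Longrightarrow> rep n f"
proof (induction rule: polyfun.induct)
  case (pf_const c)
  show ?case unfolding rep_def
    by (rule exI[of _ "Poly_Mapping.single 0 c"]) (auto simp: keys_in_def mp_eval_single)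
next
  case (pf_var i)
  show ?case unfolding rep_def
    by (rule exI[of _ "Poly_Mapping.single (Poly_Mapping.single i 1) 1"])
       (use pf_var in \<open>auto simp: keys_in_def mp_eval_single monval_def\<close>)
next
  case (pf_add f g)
  then obtain H1 H2 where H: "keys_in n H1" "\<forall>a. f a = mp_eval H1 a" "keys_in n H2" "\<forall>a. g a = mp_eval H2 a"
    unfolding rep_def by blast
  show ?case unfolding rep_def
  proof (intro exI conjI allI)
    show "keys_in n (H1 + H2)" using H(1,3) keys_add[of H1 H2] unfolding keys_in_def by (meson Un_iff subsetD)
    fix a show "f a + g a = mp_eval (H1 + H2) a" using H by (simp add: mp_eval_add)
  qed
next
  case (pf_mult f g)
  then obtain H1 H2 where H: "keys_in n H1" "\<forall>a. f a = mp_eval H1 a" "keys_in n H2" "\<forall>a. g a = mp_eval H2 a"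
    unfolding rep_def by blast
  define J where "J = Poly_Mapping.keys H1 \<times> Poly_Mapping.keys H2"
  define H where "H = (\<Sum>j\<in>J. Poly_Mapping.single (fst j + snd j)
                    (Poly_Mapping.lookup H1 (fst j) * Poly_Mapping.lookup H2 (snd j)))"
  have finJ: "finite J" by (simp add: J_def)
  show ?case unfolding rep_def
  proof (intro exI conjI allI)
    show "keys_in n H"
      unfolding keys_in_def
    proof
      fix m assume "m \<in> Poly_Mapping.keys H"
      then have "m \<in> (\<Union>j\<in>J. Poly_Mapping.keys (Poly_Mapping.single (fst j + snd j)
                    (Poly_Mapping.lookup H1 (fst j) * Poly_Mapping.lookup H2 (snd j))))"
        unfolding H_def by (rule subsetD[OF keys_sum_sub])
      then obtain j where j: "j \<in> J" "m \<in> Poly_Mapping.keys (Poly_Mapping.single (fst j + snd j)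
                    (Poly_Mapping.lookup H1 (fst j) * Poly_Mapping.lookup H2 (snd j)))"
        by (rule UN_E)
      then have "m = fst j + snd j" by (auto split: if_splits)
      then have "Poly_Mapping.keys m \<subseteq> Poly_Mapping.keys (fst j) \<union> Poly_Mapping.keys (snd j)"
        using keys_add[of "fst j" "snd j"] by simp
      moreover have "Poly_Mapping.keys (fst j) \<subseteq> {..<n}" "Poly_Mapping.keys (snd j) \<subseteq> {..<n}"
        using H(1,3) j(1) unfolding keys_in_def J_def by auto
      ultimately show "Poly_Mapping.keys m \<subseteq> {..<n}" by blast
    qed
    fix a
    have "mp_eval H a = (\<Sum>j\<in>J. (Poly_Mapping.lookup H1 (fst j) * Poly_Mapping.lookup H2 (snd j)) * monval (fst j + snd j) a)"
      unfolding H_def by (rule mp_eval_sum_single[OF finJ])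
    also have "\<dots> = (\<Sum>j\<in>J. (Poly_Mapping.lookup H1 (fst j) * monval (fst j) a) * (Poly_Mapping.lookup H2 (snd j) * monval (snd j) a))"
      by (simp add: monval_add mult_ac)
    also have "\<dots> = mp_eval H1 a * mp_eval H2 a"
      unfolding J_def mp_eval_monval sum_product sum.cartesian_product by (simp add: case_prod_beta)
    finally show "f a * g a = mp_eval H a" using H by simp
  qed
qed

subsection \<open>Univariate restriction and density\<close>

lemma pf_univ: "polyfun n f \<Longrightarrow> \<exists>p. \<forall>t. f (a(i := t)) = poly p t"
proof (induction rule: polyfun.induct)
  case (pf_const c) then show ?case by (intro exI[of _ "[:c:]"]) simp
next
  case (pf_var j)
  show ?case
  proof (cases "j = i")
    case True then show ?thesis by (intro exI[of _ "[:0, 1:]"]) simp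
  next
    case False then show ?thesis by (intro exI[of _ "[:a j:]"]) simp
  qed
next
  case (pf_add f g)
  then obtain p q where "\<forall>t. f (a(i := t)) = poly p t" "\<forall>t. g (a(i := t)) = poly q t" by blast
  then show ?case by (intro exI[of _ "p + q"]) (simp add: fun_upd_def)
next
  case (pf_mult f g)
  then obtain p q where "\<forall>t. f (a(i := t)) = poly p t" "\<forall>t. g (a(i := t)) = poly q t" by blast
  then show ?case by (intro exI[of _ "p * q"]) (simp add: fun_upd_def)
qed

lemma vanish_cofinite:
  fixes f :: "(nat \<Rightarrow> 'a::field) \<Rightarrow> 'a"
  assumes inf: "infinite (UNIV::'a set)" and pf: "polyfun n f" and fin: "finite X"
    and z: "\<And>t. t \<notin> X \<Longrightarrow> f (a(i := t)) = 0"
  shows "f a = 0"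
proof -
  obtain p where p: "\<forall>t. f (a(i := t)) = poly p t" using pf_univ[OF pf] by blast
  have "p = 0"
  proof (rule ccontr)
    assume "p \<noteq> 0"
    then have "finite {t. poly p t = 0}" by (rule poly_roots_finite)
    moreover have "UNIV - X \<subseteq> {t. poly p t = 0}" using z p by auto
    ultimately have "finite (UNIV - X)" by (rule finite_subset[rotated])
    then show False using fin inf by simp
  qed
  then show ?thesis using p[rule_format, of "a i"] by simp
qed

lemma density_gen:
  fixes g :: "(nat \<Rightarrow> 'a::field) \<Rightarrow> 'a"
  assumes inf: "infinite (UNIV::'a set)" and pf: "polyfun n g" and fin: "finite R"
  shows "inj_on b ({..<n} - R) \<Longrightarrow> (\<forall>a. (\<forall>i. i \<notin> R \<longrightarrow> a i = b i) \<and> inj_on a {..<n} \<longrightarrow> g a = 0)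
     \<Longrightarrow> (\<forall>i. i \<notin> R \<longrightarrow> a i = b i) \<Longrightarrow> g a = 0"
  using fin
proof (induction R arbitrary: b a rule: finite_induct)
  case empty
  then have "a = b" by auto
  with empty show ?case by auto
next
  case (insert r R)
  let ?X = "b ` ({..<n} - insert r R)"
  have "g (a(r:=t)) = 0" if t: "t \<notin> ?X" for t
  proof (rule insert.IH[of "a(r:=t)"])
    have eqb: "a i = b i" if "i \<notin> insert r R" for i using insert.prems(3) that by auto
    have "inj_on b ({..<n} - insert r R)" using insert.prems(1) by (rule inj_on_subset) auto
    then have "inj_on a ({..<n} - insert r R)" by (rule inj_on_cong[THEN iffD1, rotated]) (simp add: eqb)
    then have "inj_on (a(r:=t)) ({..<n} - insert r R)" by (rule inj_on_cong[THEN iffD1, rotated]) auto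
    moreover have "t \<notin> (a(r:=t)) ` ({..<n} - insert r R)" using t eqb by auto
    ultimately have "inj_on (a(r:=t)) (insert r ({..<n} - insert r R))" by simp
    then show "inj_on (a(r:=t)) ({..<n} - R)" by (rule inj_on_subset) auto
    show "\<forall>a'. (\<forall>i. i \<notin> R \<longrightarrow> a' i = (a(r := t)) i) \<and> inj_on a' {..<n} \<longrightarrow> g a' = 0"
    proof (intro allI impI)
      fix a' assume a': "(\<forall>i. i \<notin> R \<longrightarrow> a' i = (a(r := t)) i) \<and> inj_on a' {..<n}"
      then have "\<forall>i. i \<notin> insert r R \<longrightarrow> a' i = b i" using eqb by auto
      then show "g a' = 0" using insert.prems(2) a' by blast
    qed
    show "\<forall>i. i \<notin> R \<longrightarrow> (a(r := t)) i = (a(r := t)) i" by simp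
  qed
  then show ?case using vanish_cofinite[OF inf pf, of ?X a r] by simp
qed

lemma density:
  fixes g :: "(nat \<Rightarrow> 'a::field) \<Rightarrow> 'a"
  assumes inf: "infinite (UNIV::'a set)" and pf: "polyfun n g"
    and z: "\<And>a. inj_on a {..<n} \<Longrightarrow> g a = 0"
  shows "g a = 0"
  by (rule density_gen[OF inf pf, of "{..<n}" a]) (use z in auto)

subsection \<open>Division\<close>

lemma pf_subst: "polyfun n f \<Longrightarrow> j < n \<Longrightarrow> polyfun n (\<lambda>a. f (a(i := a j)))"
proof -
  assume f: "polyfun n f" and j: "j < n"
  have "polyfun n (\<lambda>a. f ((\<lambda>a. a(i := a j)) a))"
  proof (rule pf_comp[OF f])
    fix m assume "m < n"
    then show "polyfun n (\<lambda>a. (a(i := a j)) m)"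
      using j by (cases "m = i") (auto intro: polyfun.intros)
  qed
  then show ?thesis by simp
qed

lemma polyfun_division:
  assumes "polyfun n f" "j < n" "i \<noteq> j"
  shows "\<exists>q. polyfun n q \<and> (\<forall>a. f a - f (a(i := a j)) = (a i - a j) * q a)"
  using assms(1)
proof (induction rule: polyfun.induct)
  case (pf_const c) then show ?case by (intro exI[of _ "\<lambda>a. 0"]) (auto intro: polyfun.intros)
next
  case (pf_var m)
  show ?case
  proof (cases "m = i")
    case True then show ?thesis by (intro exI[of _ "\<lambda>a. 1"]) (auto intro: polyfun.intros)
  next
    case False then show ?thesis by (intro exI[of _ "\<lambda>a. 0"]) (auto intro: polyfun.intros)
  qed
next
  case (pf_add f g)
  then obtain q1 q2 where q: "polyfun n q1" "\<forall>a. f a - f (a(i := a j)) = (a i - a j) * q1 a"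
    "polyfun n q2" "\<forall>a. g a - g (a(i := a j)) = (a i - a j) * q2 a" by blast
  show ?case
  proof (intro exI[of _ "\<lambda>a. q1 a + q2 a"] conjI allI)
    show "polyfun n (\<lambda>a. q1 a + q2 a)" using q by (auto intro: polyfun.intros)
    fix a
    have e1: "f a - f (a(i := a j)) = (a i - a j) * q1 a" using q by blast
    have e2: "g a - g (a(i := a j)) = (a i - a j) * q2 a" using q by blast
    have "f a + g a - (f (a(i := a j)) + g (a(i := a j))) = (f a - f (a(i := a j))) + (g a - g (a(i := a j)))"
      by (simp add: algebra_simps)
    also have "\<dots> = (a i - a j) * (q1 a + q2 a)" unfolding e1 e2 by (simp add: distrib_left)
    finally show "f a + g a - (f (a(i := a j)) + g (a(i := a j))) = (a i - a j) * (q1 a + q2 a)" .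
  qed
next
  case (pf_mult f g)
  then obtain q1 q2 where q: "polyfun n q1" "\<forall>a. f a - f (a(i := a j)) = (a i - a j) * q1 a"
    "polyfun n q2" "\<forall>a. g a - g (a(i := a j)) = (a i - a j) * q2 a" by blast
  show ?case
  proof (intro exI[of _ "\<lambda>a. q1 a * g a + f (a(i := a j)) * q2 a"] conjI allI)
    show "polyfun n (\<lambda>a. q1 a * g a + f (a(i := a j)) * q2 a)"
    proof (rule pf_add)
      have "polyfun n g" using pf_mult by blast
      then show "polyfun n (\<lambda>a. q1 a * g a)" using q(1) by (rule polyfun.pf_mult[rotated])
      have "polyfun n f" using pf_mult by blast
      then have "polyfun n (\<lambda>a. f (a(i := a j)))" using assms(2) by (rule pf_subst)
      then show "polyfun n (\<lambda>a. f (a(i := a j)) * q2 a)" using q(3) by (rule polyfun.pf_mult)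
    qed
    fix a
    have "f a * g a - f (a(i := a j)) * g (a(i := a j)) =
      (f a - f (a(i := a j))) * g a + f (a(i := a j)) * (g a - g (a(i := a j)))"
      by (simp add: algebra_simps)
    also have "\<dots> = (a i - a j) * (q1 a * g a + f (a(i := a j)) * q2 a)"
      using q by (simp add: distrib_left mult_ac)
    finally show "f a * g a - f (a(i := a j)) * g (a(i := a j)) = (a i - a j) * (q1 a * g a + f (a(i := a j)) * q2 a)" .
  qed
qed

lemma vanish_transfer:
  fixes q :: "(nat \<Rightarrow> 'a::field) \<Rightarrow> 'a"
  assumes inf: "infinite (UNIV::'a set)" and pq: "polyfun n q"
  and eq: "\<And>a. P a = (a i - a j) * q a" and ij: "i \<noteq> j" and kl: "{k,l} \<noteq> {i,j}"
  and van: "\<And>a. a k = a l \<Longrightarrow> P a = 0" and ak: "a k = a l"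
  shows "q a = 0"
proof (cases "i \<in> {k,l}")
  case False
  show ?thesis
  proof (rule vanish_cofinite[OF inf pq, of "{a j}" a i])
    fix t :: 'a assume t: "t \<notin> {a j}"
    have "P (a(i:=t)) = 0" using False ak by (intro van) auto
    then have "(t - a j) * q (a(i:=t)) = 0" using eq[of "a(i:=t)"] ij by simp
    then show "q (a(i:=t)) = 0" using t by simp
  qed simp
next
  case True
  then have jn: "j \<notin> {k,l}" using kl ij by auto
  show ?thesis
  proof (rule vanish_cofinite[OF inf pq, of "{a i}" a j])
    fix t :: 'a assume t: "t \<notin> {a i}"
    have "P (a(j:=t)) = 0" using jn ak by (intro van) auto
    then have "(a i - t) * q (a(j:=t)) = 0" using eq[of "a(j:=t)"] ij by simp
    then show "q (a(j:=t)) = 0" using t by simp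
  qed simp
qed

lemma iter_division:
  fixes P :: "(nat \<Rightarrow> 'a::field) \<Rightarrow> 'a"
  assumes inf: "infinite (UNIV::'a set)"
  shows "finite X \<Longrightarrow> polyfun n P \<Longrightarrow> (\<forall>x\<in>X. u x < n \<and> v x < n \<and> u x \<noteq> v x) \<Longrightarrow>
    (\<forall>x\<in>X. \<forall>y\<in>X. x \<noteq> y \<longrightarrow> {u x, v x} \<noteq> {u y, v y}) \<Longrightarrow>
    (\<forall>x\<in>X. \<forall>a. a (u x) = a (v x) \<longrightarrow> P a = 0) \<Longrightarrow>
    \<exists>Q. polyfun n Q \<and> (\<forall>a. P a = Q a * (\<Prod>x\<in>X. a (u x) - a (v x)))"
proof (induction X arbitrary: P rule: finite_induct)
  case empty then show ?case by (intro exI[of _ P]) simp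
next
  case (insert x X)
  have x: "u x < n" "v x < n" "u x \<noteq> v x" using insert.prems(2) by auto
  obtain q where q: "polyfun n q" "\<forall>a. P a - P (a(u x := a (v x))) = (a (u x) - a (v x)) * q a"
    using polyfun_division[OF insert.prems(1) x(2,3)] by blast
  have Pq: "P a = (a (u x) - a (v x)) * q a" for a
  proof -
    have "P (a(u x := a (v x))) = 0" using insert.prems(4) x(3) by auto
    then show ?thesis using q(2) by (metis diff_zero)
  qed
  have qv: "\<forall>y\<in>X. \<forall>a. a (u y) = a (v y) \<longrightarrow> q a = 0"
  proof (intro ballI allI impI)
    fix y and a :: "nat \<Rightarrow> 'a" assume y: "y \<in> X" and ay: "a (u y) = a (v y)"
    have "x \<noteq> y" using y insert.hyps(2) by auto
    then have "{u y, v y} \<noteq> {u x, v x}" using insert.prems(3) y by auto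
    then show "q a = 0"
      by (rule vanish_transfer[OF inf q(1) Pq x(3) _ _ ay])
         (use insert.prems(4) y in auto)
  qed
  obtain Q where Q: "polyfun n Q" "\<forall>a. q a = Q a * (\<Prod>x\<in>X. a (u x) - a (v x))"
    using insert.IH[OF q(1)] insert.prems qv by auto
  show ?case
    by (intro exI[of _ Q] conjI allI Q(1)) (simp add: Pq Q(2) insert.hyps mult_ac)
qed

definition PH :: "(nat \<Rightarrow> nat) \<Rightarrow> 'a::comm_ring_1 mpoly \<Rightarrow> 'a mpoly" where
  "PH \<sigma> H = (\<Sum>u\<in>Poly_Mapping.keys H. Poly_Mapping.single (Poly_Mapping.map_key (inv \<sigma>) u) (Poly_Mapping.lookup H u))"

lemma perm_inj_inv: "\<sigma> permutes S \<Longrightarrow> inj (inv \<sigma>)"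
  using permutes_inj permutes_inv by blast

lemma lookup_map_key_perm:
  "\<sigma> permutes S \<Longrightarrow> Poly_Mapping.lookup (Poly_Mapping.map_key (inv \<sigma>) u) i = Poly_Mapping.lookup u (inv \<sigma> i)"
  using perm_inj_inv[of \<sigma> S] by (simp add: map_key.rep_eq)

lemma lookup_map_key_perm2:
  "\<sigma> permutes S \<Longrightarrow> Poly_Mapping.lookup (Poly_Mapping.map_key \<sigma> u) i = Poly_Mapping.lookup u (\<sigma> i)"
  using permutes_inj[of \<sigma> S] by (simp add: map_key.rep_eq)

lemma map_key_inv_cancel:
  assumes "\<sigma> permutes S"
  shows "Poly_Mapping.map_key (inv \<sigma>) (Poly_Mapping.map_key \<sigma> m) = m"
    "Poly_Mapping.map_key \<sigma> (Poly_Mapping.map_key (inv \<sigma>) m) = m"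
  by (rule poly_mapping_eqI,
      simp add: lookup_map_key_perm[OF assms] lookup_map_key_perm2[OF assms] permutes_inverses[OF assms])+

lemma PH_eval:
  assumes s: "\<sigma> permutes {..<n}" and kn: "keys_in n H"
  shows "mp_eval (PH \<sigma> H) a = mp_eval H (\<lambda>i. a (\<sigma> i))"
proof -
  have mv: "monval (Poly_Mapping.map_key (inv \<sigma>) u) a = monval u (\<lambda>i. a (\<sigma> i))"
    if u: "u \<in> Poly_Mapping.keys H" for u
  proof -
    have ku: "Poly_Mapping.keys u \<subseteq> {..<n}" using kn u unfolding keys_in_def by auto
    have "Poly_Mapping.keys (Poly_Mapping.map_key (inv \<sigma>) u) \<subseteq> {..<n}"
    proof
      fix i assume "i \<in> Poly_Mapping.keys (Poly_Mapping.map_key (inv \<sigma>) u)"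
      then have "inv \<sigma> i \<in> Poly_Mapping.keys u"
        by (simp add: in_keys_iff lookup_map_key_perm[OF s])
      then have "inv \<sigma> i < n" using ku by auto
      then have "\<sigma> (inv \<sigma> i) < n" using permutes_in_image[OF s] by auto
      then show "i \<in> {..<n}" by (simp add: permutes_inverses[OF s])
    qed
    then have "monval (Poly_Mapping.map_key (inv \<sigma>) u) a = (\<Prod>i<n. a i ^ Poly_Mapping.lookup u (inv \<sigma> i))"
      by (subst monval_superset[of "{..<n}"]) (auto simp: lookup_map_key_perm[OF s])
    also have "\<dots> = (\<Prod>j<n. a (\<sigma> j) ^ Poly_Mapping.lookup u (inv \<sigma> (\<sigma> j)))"
      using prod.permute[OF s, of "\<lambda>i. a i ^ Poly_Mapping.lookup u (inv \<sigma> i)"] by (simp add: comp_def)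
    also have "\<dots> = (\<Prod>j<n. a (\<sigma> j) ^ Poly_Mapping.lookup u j)"
      by (simp add: permutes_inverses[OF s])
    also have "\<dots> = monval u (\<lambda>i. a (\<sigma> i))"
      by (subst monval_superset[of "{..<n}"]) (use ku in auto)
    finally show ?thesis .
  qed
  have "mp_eval (PH \<sigma> H) a = (\<Sum>u\<in>Poly_Mapping.keys H. Poly_Mapping.lookup H u * monval (Poly_Mapping.map_key (inv \<sigma>) u) a)"
    unfolding PH_def by (rule mp_eval_sum_single) simp
  also have "\<dots> = mp_eval H (\<lambda>i. a (\<sigma> i))"
    unfolding mp_eval_monval by (rule sum.cong) (simp_all add: mv)
  finally show ?thesis .
qed

lemma PH_keys_in:
  assumes s: "\<sigma> permutes {..<n}" and kn: "keys_in n H"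
  shows "keys_in n (PH \<sigma> H)"
  unfolding keys_in_def
proof
  fix m assume "m \<in> Poly_Mapping.keys (PH \<sigma> H)"
  then have "m \<in> (\<Union>u\<in>Poly_Mapping.keys H. Poly_Mapping.keys (Poly_Mapping.single (Poly_Mapping.map_key (inv \<sigma>) u) (Poly_Mapping.lookup H u)))"
    unfolding PH_def by (rule subsetD[OF keys_sum_sub])
  then obtain u where u: "u \<in> Poly_Mapping.keys H" "m = Poly_Mapping.map_key (inv \<sigma>) u"
    by (auto split: if_splits)
  have ku: "Poly_Mapping.keys u \<subseteq> {..<n}" using kn u unfolding keys_in_def by auto
  show "Poly_Mapping.keys m \<subseteq> {..<n}"
  proof
    fix i assume "i \<in> Poly_Mapping.keys m"
    then have "inv \<sigma> i \<in> Poly_Mapping.keys u"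
      by (simp add: u(2) in_keys_iff lookup_map_key_perm[OF s])
    then have "inv \<sigma> i < n" using ku by auto
    then have "\<sigma> (inv \<sigma> i) < n" using permutes_in_image[OF s] by auto
    then show "i \<in> {..<n}" by (simp add: permutes_inverses[OF s])
  qed
qed

lemma PH_lookup:
  assumes s: "\<sigma> permutes S"
  shows "Poly_Mapping.lookup (PH \<sigma> H) m' = Poly_Mapping.lookup H (Poly_Mapping.map_key \<sigma> m')"
proof -
  have eq: "(Poly_Mapping.map_key (inv \<sigma>) u = m') \<longleftrightarrow> (u = Poly_Mapping.map_key \<sigma> m')" for u
    using map_key_inv_cancel[OF s] by metis
  have "Poly_Mapping.lookup (PH \<sigma> H) m' =
     (\<Sum>u\<in>Poly_Mapping.keys H. if u = Poly_Mapping.map_key \<sigma> m' then Poly_Mapping.lookup H u else 0)"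
    unfolding PH_def lookup_sum lookup_single by (intro sum.cong refl) (simp add: when_def eq)
  also have "\<dots> = Poly_Mapping.lookup H (Poly_Mapping.map_key \<sigma> m')"
    by (simp add: in_keys_iff)
  finally show ?thesis .
qed

lemma Wk_keys_in: "F \<in> Wk n \<Longrightarrow> keys_in n F"
  unfolding Wk_def keys_in_def by blast

lemma Wk_PH:
  assumes F: "F \<in> Wk n" and s: "\<sigma> permutes {..<n}"
  shows "PH \<sigma> F = F"
proof (rule poly_mapping_eqI)
  fix m'
  have "Poly_Mapping.lookup (PH \<sigma> F) m' = Poly_Mapping.lookup F (Poly_Mapping.map_key \<sigma> m')"
    by (rule PH_lookup[OF s])
  also have "\<dots> = Poly_Mapping.lookup F m'"
  proof -
    have W: "\<forall>\<sigma>. \<sigma> permutes {..<n} \<longrightarrow>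
        (\<forall>m m'. (\<forall>i. Poly_Mapping.lookup m' (\<sigma> i) = Poly_Mapping.lookup m i) \<longrightarrow> Poly_Mapping.lookup F m' = Poly_Mapping.lookup F m)"
      using F unfolding Wk_def by blast
    have "Poly_Mapping.lookup F m' = Poly_Mapping.lookup F (Poly_Mapping.map_key \<sigma> m')"
      by (rule W[rule_format, OF s]) (simp add: lookup_map_key_perm2[OF s])
    then show ?thesis by simp
  qed
  finally show "Poly_Mapping.lookup (PH \<sigma> F) m' = Poly_Mapping.lookup F m'" .
qed

lemma Wk_eval_perm:
  assumes F: "F \<in> Wk n" and s: "\<sigma> permutes {..<n}"
  shows "mp_eval F (\<lambda>i. a (\<sigma> i)) = mp_eval F a"
  using PH_eval[OF s Wk_keys_in[OF F], of a] Wk_PH[OF F s] by simp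

lemma keys_in_diff: "keys_in n (H1::'a::ab_group_add mpoly) \<Longrightarrow> keys_in n H2 \<Longrightarrow> keys_in n (H1 - H2)"
  unfolding keys_in_def using keys_diff_sub[of H1 H2] by blast

lemma sym_imp_Wk:
  fixes H :: "'a::field mpoly"
  assumes inf: "infinite (UNIV::'a set)" and kn: "keys_in n H"
    and sym: "\<And>\<sigma> a. \<sigma> permutes {..<n} \<Longrightarrow> mp_eval H (\<lambda>i. a (\<sigma> i)) = mp_eval H a"
  shows "H \<in> Wk n"
  unfolding Wk_def
proof (intro CollectI conjI allI impI)
  show "\<forall>m\<in>Poly_Mapping.keys H. Poly_Mapping.keys m \<subseteq> {..<n}" using kn unfolding keys_in_def .
  fix \<sigma> and m m' :: "nat \<Rightarrow>\<^sub>0 nat" assume s: "\<sigma> permutes {..<n}" and mm: "\<forall>i. Poly_Mapping.lookup m' (\<sigma> i) = Poly_Mapping.lookup m i"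
  have "PH \<sigma> H - H = 0"
  proof (rule mp_identity[OF inf])
    show "keys_in n (PH \<sigma> H - H)" by (intro keys_in_diff PH_keys_in s kn)
    show "\<forall>a. mp_eval (PH \<sigma> H - H) a = 0"
      by (simp add: mp_eval_diff PH_eval[OF s kn] sym[OF s])
  qed
  then have "PH \<sigma> H = H" by simp
  moreover have "Poly_Mapping.map_key \<sigma> m' = m"
    by (rule poly_mapping_eqI) (simp add: lookup_map_key_perm2[OF s] mm)
  ultimately show "Poly_Mapping.lookup H m' = Poly_Mapping.lookup H m"
    using PH_lookup[OF s, of H m'] by simp
qed

lemma exists_Wk:
  fixes Q :: "(nat \<Rightarrow> 'a::field) \<Rightarrow> 'a"
  assumes inf: "infinite (UNIV::'a set)" and pf: "polyfun n Q"
    and sym: "\<And>\<sigma> a. \<sigma> permutes {..<n} \<Longrightarrow> Q (\<lambda>i. a (\<sigma> i)) = Q a"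
  shows "\<exists>H\<in>Wk n. \<forall>a. mp_eval H a = Q a"
proof -
  obtain H where H: "keys_in n H" "\<forall>a. Q a = mp_eval H a"
    using polyfun_rep[OF pf] unfolding rep_def by blast
  have "H \<in> Wk n" by (rule sym_imp_Wk[OF inf H(1)]) (metis H(2) sym)
  then show ?thesis using H(2) by auto
qed

lemma Wk_unique:
  fixes H1 :: "'a::field mpoly"
  assumes inf: "infinite (UNIV::'a set)" and k1: "keys_in n H1" and k2: "keys_in n H2"
    and eq: "\<And>a. inj_on a {..<n} \<Longrightarrow> mp_eval H1 a = mp_eval H2 a"
  shows "H1 = H2"
proof -
  have kd: "keys_in n (H1 - H2)" by (rule keys_in_diff[OF k1 k2])
  have "H1 - H2 = 0"
  proof (rule mp_identity[OF inf kd], intro allI)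
    fix a
    show "mp_eval (H1 - H2) a = 0"
      by (rule density[OF inf mp_eval_polyfun[OF kd]]) (simp add: mp_eval_diff eq)
  qed
  then show ?thesis by simp
qed

lemma sm_unique:
  fixes f g :: "nat \<Rightarrow> nat"
  assumes f: "strict_mono_on {a..<b} f" and g: "strict_mono_on {a..<b} g"
    and im: "f ` {a..<b} = g ` {a..<b}" and i: "i \<in> {a..<b}"
  shows "f i = g i"
proof -
  have sf: "sorted_wrt (<) (map f [a..<b])"
    by (rule sorted_wrt_map_mono[OF sorted_wrt_upt], rule strict_mono_onD[OF f]) auto
  have sg: "sorted_wrt (<) (map g [a..<b])"
    by (rule sorted_wrt_map_mono[OF sorted_wrt_upt], rule strict_mono_onD[OF g]) auto
  have "map g [a..<b] = map f [a..<b]"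
    by (rule strict_sorted_equal[OF sf sg]) (use im in simp)
  then show ?thesis using i by (simp add: map_eq_conv)
qed

definition Tm :: "'a::field mpoly \<Rightarrow> 'a mpoly \<Rightarrow> nat \<Rightarrow> nat \<Rightarrow> (nat \<Rightarrow> 'a) \<Rightarrow> (nat \<Rightarrow> nat) \<Rightarrow> 'a" where
  "Tm F G k l a \<sigma> = mp_eval F (\<lambda>i. a (\<sigma> i)) * mp_eval G (\<lambda>i. a (\<sigma> (i + k))) *
           (\<Prod>r<k. \<Prod>r'\<in>{k..<k+l}.
              (a (\<sigma> r) - a (\<sigma> r') + 1) / (a (\<sigma> r) - a (\<sigma> r')))"

lemma perm_lt: "\<sigma> permutes {..<(n::nat)} \<Longrightarrow> (\<sigma> x < n) = (x < n)"
  using permutes_in_image[of \<sigma> "{..<n}" x] by simp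

lemma perm_split_image:
  fixes k l :: nat
  assumes s: "\<sigma> permutes {..<k+l}"
  shows "\<sigma> ` {k..<k+l} = {..<k+l} - \<sigma> ` {..<k}"
proof -
  have D: "{k..<k+l} = {..<k+l} - {..<k}" by (auto simp: set_eq_iff)
  have "\<sigma> ` {k..<k+l} = \<sigma> ` ({..<k+l} - {..<k})" by (simp only: D)
  also have "\<dots> = \<sigma> ` {..<k+l} - \<sigma> ` {..<k}" by (rule image_set_diff[OF permutes_inj[OF s]])
  finally show ?thesis using permutes_image[OF s] by simp
qed

lemma Tm_img:
  fixes F G :: "'a::field mpoly"
  assumes F: "F \<in> Wk k" and G: "G \<in> Wk l"
    and s: "\<sigma> permutes {..<k+l}" and s': "\<sigma>' permutes {..<k+l}"
    and im: "\<sigma> ` {..<k} = \<sigma>' ` {..<k}"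
  shows "Tm F G k l a \<sigma>' = Tm F G k l a \<sigma>"
proof -
  define u where "u = inv \<sigma> \<circ> \<sigma>'"
  have up: "u permutes {..<k+l}" unfolding u_def by (rule permutes_compose[OF s' permutes_inv[OF s]])
  have su: "\<sigma>' x = \<sigma> (u x)" for x by (simp add: u_def permutes_inverses[OF s])
  have uinj: "inj u" using permutes_inj[OF up] .
  have uk_sub: "u ` {..<k} \<subseteq> {..<k}"
  proof
    fix y assume "y \<in> u ` {..<k}"
    then obtain r where r: "r < k" "y = u r" by auto
    have "\<sigma>' r \<in> \<sigma> ` {..<k}" using im r by auto
    then obtain r0 where "r0 < k" "\<sigma>' r = \<sigma> r0" by auto
    then show "y \<in> {..<k}" using r by (simp add: u_def permutes_inverses[OF s])
  qed
  have uk: "u ` {..<k} = {..<k}"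
    by (rule endo_inj_surj[OF _ uk_sub]) (use uinj in \<open>auto intro: inj_on_subset\<close>)
  have ukl: "u ` {k..<k+l} = {k..<k+l}"
    using perm_split_image[OF up] uk by auto
  have bk: "bij_betw u {..<k} {..<k}" by (rule bij_betw_imageI) (use uinj uk in \<open>auto intro: inj_on_subset\<close>)
  have bkl: "bij_betw u {k..<k+l} {k..<k+l}" by (rule bij_betw_imageI) (use uinj ukl in \<open>auto intro: inj_on_subset\<close>)
  define u1 where "u1 i = (if i < k then u i else i)" for i
  have u1p: "u1 permutes {..<k}"
  proof (rule bij_imp_permutes)
    show "bij_betw u1 {..<k} {..<k}" using bk by (rule bij_betw_cong[THEN iffD1, rotated]) (simp add: u1_def)
  qed (simp add: u1_def)
  have Fp: "mp_eval F (\<lambda>i. a (\<sigma>' i)) = mp_eval F (\<lambda>i. a (\<sigma> i))"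
  proof -
    have "mp_eval F (\<lambda>i. a (\<sigma>' i)) = mp_eval F (\<lambda>i. (\<lambda>j. a (\<sigma> j)) (u1 i))"
      by (rule pf_local[OF mp_eval_polyfun[OF Wk_keys_in[OF F]]]) (simp add: u1_def su)
    also have "\<dots> = mp_eval F (\<lambda>i. a (\<sigma> i))" by (rule Wk_eval_perm[OF F u1p])
    finally show ?thesis .
  qed
  define v where "v i = (if i < l then u (i + k) - k else i)" for i
  have uik: "u (i + k) \<in> {k..<k+l}" if "i < l" for i using ukl that by auto
  have vk: "v i + k = u (i + k)" if "i < l" for i using uik[OF that] that by (simp add: v_def)
  have vsub: "v ` {..<l} \<subseteq> {..<l}"
  proof
    fix y assume "y \<in> v ` {..<l}"
    then obtain i where "i < l" "y = v i" by auto
    then show "y \<in> {..<l}" using uik[of i] by (auto simp: v_def)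
  qed
  have vinj: "inj_on v {..<l}"
  proof (rule inj_onI)
    fix x y assume "x \<in> {..<l}" "y \<in> {..<l}" "v x = v y"
    then have "u (x + k) = u (y + k)" using vk by (metis lessThan_iff)
    then show "x = y" using uinj by (simp add: inj_eq)
  qed
  have vp: "v permutes {..<l}"
  proof (rule bij_imp_permutes)
    show "bij_betw v {..<l} {..<l}" by (rule bij_betw_imageI[OF vinj endo_inj_surj[OF _ vsub vinj]]) simp
  qed (simp add: v_def)
  have Gp: "mp_eval G (\<lambda>i. a (\<sigma>' (i + k))) = mp_eval G (\<lambda>i. a (\<sigma> (i + k)))"
  proof -
    have "mp_eval G (\<lambda>i. a (\<sigma>' (i + k))) = mp_eval G (\<lambda>i. (\<lambda>j. a (\<sigma> (j + k))) (v i))"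
      by (rule pf_local[OF mp_eval_polyfun[OF Wk_keys_in[OF G]]]) (simp add: su vk)
    also have "\<dots> = mp_eval G (\<lambda>i. a (\<sigma> (i + k)))" by (rule Wk_eval_perm[OF G vp])
    finally show ?thesis .
  qed
  define h where "h x y = (a x - a y + 1) / (a x - a y)" for x y
  have Pp: "(\<Prod>r<k. \<Prod>r'\<in>{k..<k+l}. h (\<sigma>' r) (\<sigma>' r')) = (\<Prod>r<k. \<Prod>r'\<in>{k..<k+l}. h (\<sigma> r) (\<sigma> r'))"
  proof -
    have "(\<Prod>r<k. \<Prod>r'\<in>{k..<k+l}. h (\<sigma>' r) (\<sigma>' r')) = (\<Prod>r<k. \<Prod>r'\<in>{k..<k+l}. h (\<sigma> (u r)) (\<sigma> (u r')))"
      by (simp add: su)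
    also have "\<dots> = (\<Prod>r<k. \<Prod>r'\<in>{k..<k+l}. h (\<sigma> (u r)) (\<sigma> r'))"
      by (rule prod.cong[OF refl], rule prod.reindex_bij_betw[OF bkl, of "\<lambda>r'. h (\<sigma> (u _)) (\<sigma> r')"])
    also have "\<dots> = (\<Prod>r<k. \<Prod>r'\<in>{k..<k+l}. h (\<sigma> r) (\<sigma> r'))"
      by (rule prod.reindex_bij_betw[OF bk, of "\<lambda>r. \<Prod>r'\<in>{k..<k+l}. h (\<sigma> r) (\<sigma> r')"])
    finally show ?thesis .
  qed
  show ?thesis unfolding Tm_def using Fp Gp Pp unfolding h_def by simp
qed

lemma shuffle_perm: "\<sigma> \<in> shuffles k l \<Longrightarrow> \<sigma> permutes {..<k+l}"
  by (simp add: shuffles_def)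

lemma shuffle_bij:
  "bij_betw (\<lambda>\<sigma>. \<sigma> ` {..<k}) (shuffles k l) {B. B \<subseteq> {..<k+l} \<and> card B = k}"
proof (rule bij_betw_imageI)
  show "inj_on (\<lambda>\<sigma>. \<sigma> ` {..<k}) (shuffles k l)"
  proof (rule inj_onI)
    fix \<sigma> \<sigma>' assume s: "\<sigma> \<in> shuffles k l" and s': "\<sigma>' \<in> shuffles k l" and im: "\<sigma> ` {..<k} = \<sigma>' ` {..<k}"
    have ps: "\<sigma> permutes {..<k+l}" "\<sigma>' permutes {..<k+l}" using s s' by (simp_all add: shuffles_def)
    have m1: "strict_mono_on {0..<k} \<sigma>" "strict_mono_on {0..<k} \<sigma>'"
      using s s' by (simp_all add: shuffles_def atLeast0LessThan)
    have m2: "strict_mono_on {k..<k+l} \<sigma>" "strict_mono_on {k..<k+l} \<sigma>'"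
      using s s' by (simp_all add: shuffles_def)
    have im2: "\<sigma> ` {k..<k+l} = \<sigma>' ` {k..<k+l}" using perm_split_image[OF ps(1)] perm_split_image[OF ps(2)] im by simp
    show "\<sigma> = \<sigma>'"
    proof
      fix x
      consider "x < k" | "k \<le> x \<and> x < k + l" | "\<not> x < k + l" by linarith
      then show "\<sigma> x = \<sigma>' x"
      proof cases
        case 1 then show ?thesis using sm_unique[OF m1(1,2)] im by (simp add: atLeast0LessThan)
      next
        case 2 then show ?thesis using sm_unique[OF m2(1,2) im2] by simp
      next
        case 3 then show ?thesis using permutes_not_in[OF ps(1)] permutes_not_in[OF ps(2)] by simp
      qed
    qed
  qed
  show "(\<lambda>\<sigma>. \<sigma> ` {..<k}) ` shuffles k l = {B. B \<subseteq> {..<k+l} \<and> card B = k}"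
  proof (intro equalityI subsetI)
    fix B assume "B \<in> (\<lambda>\<sigma>. \<sigma> ` {..<k}) ` shuffles k l"
    then obtain \<sigma> where s: "\<sigma> \<in> shuffles k l" and B: "B = \<sigma> ` {..<k}" by auto
    have ps: "\<sigma> permutes {..<k+l}" using s by (simp add: shuffles_def)
    have "B \<subseteq> {..<k+l}" unfolding B by (auto simp: perm_lt[OF ps])
    moreover have "card B = k" unfolding B
      by (subst card_image) (use permutes_inj[OF ps] in \<open>auto intro: inj_on_subset\<close>)
    ultimately show "B \<in> {B. B \<subseteq> {..<k+l} \<and> card B = k}" by simp
  next
    fix B assume "B \<in> {B. B \<subseteq> {..<k+l} \<and> card B = k}"
    then have Bs: "B \<subseteq> {..<k+l}" and Bc: "card B = k" by auto
    have finB: "finite B" using Bs finite_subset by blast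
    define C where "C = {..<k+l} - B"
    have finC: "finite C" by (simp add: C_def)
    have Cc: "card C = l" unfolding C_def using Bs Bc finB by (simp add: card_Diff_subset)
    obtain h1 where h1: "bij_betw h1 {..<card B} B" "strict_mono_on {..<card B} h1"
      using ex_bij_betw_strict_mono_card[OF finB] by blast
    obtain h2 where h2: "bij_betw h2 {..<card C} C" "strict_mono_on {..<card C} h2"
      using ex_bij_betw_strict_mono_card[OF finC] by blast
    define \<sigma> where "\<sigma> i = (if i < k then h1 i else if i < k + l then h2 (i - k) else i)" for i
    have h1B: "h1 i \<in> B" if "i < k" for i using h1(1) that Bc by (auto dest: bij_betwE)
    have h2C: "h2 i \<in> C" if "i < l" for i using h2(1) that Cc by (auto dest: bij_betwE)
    have sub: "\<sigma> ` {..<k+l} \<subseteq> {..<k+l}"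
    proof
      fix y assume "y \<in> \<sigma> ` {..<k+l}"
      then obtain i where i: "i < k + l" "y = \<sigma> i" by auto
      show "y \<in> {..<k+l}"
      proof (cases "i < k")
        case True then show ?thesis using h1B[OF True] Bs i by (auto simp: \<sigma>_def)
      next
        case False then show ?thesis using h2C[of "i - k"] i by (auto simp: \<sigma>_def C_def)
      qed
    qed
    have inj: "inj_on \<sigma> {..<k+l}"
    proof (rule inj_onI)
      fix x y assume x: "x \<in> {..<k+l}" and y: "y \<in> {..<k+l}" and e: "\<sigma> x = \<sigma> y"
      show "x = y"
      proof (cases "x < k"; cases "y < k")
        assume "x < k" "y < k"
        then show ?thesis using e bij_betw_imp_inj_on[OF h1(1)] Bc by (auto simp: \<sigma>_def dest: inj_onD)
      next
        assume a: "x < k" "\<not> y < k"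
        have "y - k < l" using a y by auto
        then show ?thesis using e h1B[of x] h2C[of "y - k"] y a by (auto simp: \<sigma>_def C_def)
      next
        assume a: "\<not> x < k" "y < k"
        have "x - k < l" using a x by auto
        then show ?thesis using e h1B[of y] h2C[of "x - k"] x a by (auto simp: \<sigma>_def C_def)
      next
        assume xk: "\<not> x < k" and yk: "\<not> y < k"
        then have "h2 (x - k) = h2 (y - k)" using e x y by (simp add: \<sigma>_def)
        then have "x - k = y - k" using bij_betw_imp_inj_on[OF h2(1)] Cc x y xk yk by (auto dest: inj_onD)
        then show ?thesis using xk yk by simp
      qed
    qed
    have sp: "\<sigma> permutes {..<k+l}"
    proof (rule bij_imp_permutes)
      show "bij_betw \<sigma> {..<k+l} {..<k+l}" by (rule bij_betw_imageI[OF inj endo_inj_surj[OF _ sub inj]]) simp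
    qed (simp add: \<sigma>_def)
    have sm1: "strict_mono_on {..<k} \<sigma>"
    proof (rule strict_mono_onI)
      fix r s assume "r \<in> {..<k}" "s \<in> {..<k}" "r < s"
      then show "\<sigma> r < \<sigma> s" using strict_mono_onD[OF h1(2)] Bc by (simp add: \<sigma>_def)
    qed
    have sm2: "strict_mono_on {k..<k+l} \<sigma>"
    proof (rule strict_mono_onI)
      fix r s assume "r \<in> {k..<k+l}" "s \<in> {k..<k+l}" "r < s"
      then show "\<sigma> r < \<sigma> s" using strict_mono_onD[OF h2(2), of "r - k" "s - k"] Cc by (simp add: \<sigma>_def)
    qed
    have "\<sigma> ` {..<k} = h1 ` {..<k}" by (rule image_cong) (simp_all add: \<sigma>_def)
    also have "\<dots> = B" using h1(1) Bc by (simp add: bij_betw_def)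
    finally have "B = \<sigma> ` {..<k}" by simp
    moreover have "\<sigma> \<in> shuffles k l" using sp sm1 sm2 by (simp add: shuffles_def)
    ultimately show "B \<in> (\<lambda>\<sigma>. \<sigma> ` {..<k}) ` shuffles k l" by blast
  qed
qed

lemma image_perm_bij:
  fixes n :: nat
  assumes p: "\<pi> permutes {..<n}"
  shows "bij_betw ((`) \<pi>) {B. B \<subseteq> {..<n} \<and> card B = k} {B. B \<subseteq> {..<n} \<and> card B = k}"
proof (rule bij_betwI[where g = "(`) (inv \<pi>)"])
  have ip: "inv \<pi> permutes {..<n}" by (rule permutes_inv[OF p])
  show "(`) \<pi> \<in> {B. B \<subseteq> {..<n} \<and> card B = k} \<rightarrow> {B. B \<subseteq> {..<n} \<and> card B = k}"
    using card_image[OF inj_on_subset[OF permutes_inj[OF p]]] by (auto simp: perm_lt[OF p])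
  show "(`) (inv \<pi>) \<in> {B. B \<subseteq> {..<n} \<and> card B = k} \<rightarrow> {B. B \<subseteq> {..<n} \<and> card B = k}"
    using card_image[OF inj_on_subset[OF permutes_inj[OF ip]]] by (auto simp: perm_lt[OF ip])
  show "inv \<pi> ` \<pi> ` x = x" for x by (simp add: image_comp permutes_inv_o[OF p])
  show "\<pi> ` inv \<pi> ` y = y" for y by (simp add: image_comp permutes_inv_o[OF p])
qed

lemma Tm_perm_shift: "Tm F G k l (\<lambda>i. a (\<pi> i)) \<sigma> = Tm F G k l a (\<pi> \<circ> \<sigma>)"
  by (simp add: Tm_def)

lemma shuffle_sum_sym:
  fixes F G :: "'a::field mpoly"
  assumes F: "F \<in> Wk k" and G: "G \<in> Wk l" and p: "\<pi> permutes {..<k+l}"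
  shows "(\<Sum>\<sigma>\<in>shuffles k l. Tm F G k l (\<lambda>i. a (\<pi> i)) \<sigma>) = (\<Sum>\<sigma>\<in>shuffles k l. Tm F G k l a \<sigma>)"
proof -
  let ?K = "{B. B \<subseteq> {..<k+l} \<and> card B = k}"
  define ch where "ch B = (SOME \<sigma>. \<sigma> \<in> shuffles k l \<and> \<sigma> ` {..<k} = B)" for B
  define TS where "TS B = Tm F G k l a (ch B)" for B
  have chB: "ch B \<in> shuffles k l \<and> ch B ` {..<k} = B" if "B \<in> ?K" for B
  proof -
    have "B \<in> (\<lambda>\<sigma>. \<sigma> ` {..<k}) ` shuffles k l" using that shuffle_bij[of k l] by (simp add: bij_betw_def)
    then have "\<exists>\<sigma>. \<sigma> \<in> shuffles k l \<and> \<sigma> ` {..<k} = B" by blast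
    then show ?thesis unfolding ch_def by (rule someI_ex)
  qed
  have TS_eq: "TS (\<tau> ` {..<k}) = Tm F G k l a \<tau>" if t: "\<tau> permutes {..<k+l}" for \<tau>
  proof -
    have inK: "\<tau> ` {..<k} \<in> ?K"
      using card_image[OF inj_on_subset[OF permutes_inj[OF t]]] by (auto simp: perm_lt[OF t])
    show ?thesis unfolding TS_def
      by (rule Tm_img[OF F G t]) (use chB[OF inK] shuffle_perm in auto)
  qed
  have "(\<Sum>\<sigma>\<in>shuffles k l. Tm F G k l (\<lambda>i. a (\<pi> i)) \<sigma>) = (\<Sum>\<sigma>\<in>shuffles k l. TS (\<pi> ` (\<sigma> ` {..<k})))"
  proof (rule sum.cong[OF refl])
    fix \<sigma> assume "\<sigma> \<in> shuffles k l"
    then have "\<pi> \<circ> \<sigma> permutes {..<k+l}" using permutes_compose[OF shuffle_perm p] by blast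
    then show "Tm F G k l (\<lambda>i. a (\<pi> i)) \<sigma> = TS (\<pi> ` (\<sigma> ` {..<k}))"
      using TS_eq[of "\<pi> \<circ> \<sigma>"] by (simp add: Tm_perm_shift image_comp)
  qed
  also have "\<dots> = (\<Sum>B\<in>?K. TS (\<pi> ` B))"
    by (rule sum.reindex_bij_betw[OF shuffle_bij])
  also have "\<dots> = (\<Sum>B\<in>?K. TS B)"
    by (rule sum.reindex_bij_betw[OF image_perm_bij[OF p]])
  also have "\<dots> = (\<Sum>\<sigma>\<in>shuffles k l. TS (\<sigma> ` {..<k}))"
    by (rule sum.reindex_bij_betw[OF shuffle_bij, symmetric])
  also have "\<dots> = (\<Sum>\<sigma>\<in>shuffles k l. Tm F G k l a \<sigma>)"
    by (rule sum.cong[OF refl]) (simp add: TS_eq shuffle_perm)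
  finally show ?thesis .
qed

definition Pairs :: "nat \<Rightarrow> (nat \<times> nat) set" where
  "Pairs n = {x \<in> {..<n} \<times> {..<n}. fst x < snd x}"

definition Vd :: "nat \<Rightarrow> (nat \<Rightarrow> 'a::comm_ring_1) \<Rightarrow> 'a" where
  "Vd n a = (\<Prod>x\<in>Pairs n. a (fst x) - a (snd x))"

lemma finite_Pairs [simp]: "finite (Pairs n)"
  unfolding Pairs_def by (rule finite_subset[of _ "{..<n} \<times> {..<n}"]) auto

lemma Vd_polyfun: "polyfun n (Vd n)"
  unfolding Vd_def by (intro pf_prod pf_diff pf_var) (auto simp: Pairs_def)

lemma Vd_nonzero:
  fixes a :: "nat \<Rightarrow> 'a::field"
  assumes "inj_on a {..<n}"
  shows "Vd n a \<noteq> 0"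
  unfolding Vd_def
proof (subst prod_zero_iff[OF finite_Pairs], rule notI)
  assume "\<exists>x\<in>Pairs n. a (fst x) - a (snd x) = 0"
  then obtain x where x: "x \<in> Pairs n" "a (fst x) = a (snd x)" by auto
  then have "fst x = snd x" using assms unfolding Pairs_def by (auto dest: inj_onD)
  then show False using x unfolding Pairs_def by auto
qed

lemma Vd_vanish:
  fixes a :: "nat \<Rightarrow> 'a::field"
  assumes "i < n" "j < n" "i \<noteq> j" "a i = a j"
  shows "Vd n a = 0"
  unfolding Vd_def
proof (rule prod_zero[OF finite_Pairs])
  show "\<exists>x\<in>Pairs n. a (fst x) - a (snd x) = 0"
    by (rule bexI[of _ "(min i j, max i j)"]) (use assms in \<open>auto simp: Pairs_def min_def max_def\<close>)
qed

lemma Vd_swap: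
  fixes a :: "nat \<Rightarrow> 'a::comm_ring_1"
  assumes m: "Suc m < n"
  shows "Vd n (\<lambda>i. a (transpose m (Suc m) i)) = - Vd n a"
proof -
  let ?t = "transpose m (Suc m)"
  define Rest where "Rest = Pairs n - {(m, Suc m)}"
  have mem: "(m, Suc m) \<in> Pairs n" using m by (simp add: Pairs_def)
  define g where "g x = a (fst x) - a (snd x)" for x
  define \<phi> where "\<phi> x = (?t (fst x), ?t (snd x))" for x
  have phiR: "\<phi> x \<in> Rest" if "x \<in> Rest" for x
    using that m unfolding Rest_def Pairs_def \<phi>_def by (auto simp: transpose_def split: if_splits)
  have fs: "\<phi> \<in> Rest \<rightarrow> Rest" using phiR by auto
  have inv: "\<phi> (\<phi> x) = x" for x by (simp add: \<phi>_def)
  have bij: "bij_betw \<phi> Rest Rest"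
    by (rule bij_betwI[OF fs fs inv inv])
  have R: "(\<Prod>x\<in>Rest. g (\<phi> x)) = (\<Prod>x\<in>Rest. g x)"
    by (rule prod.reindex_bij_betw[OF bij])
  have "Vd n (\<lambda>i. a (?t i)) = (\<Prod>x\<in>Pairs n. g (\<phi> x))"
    by (simp add: Vd_def g_def \<phi>_def)
  also have "\<dots> = g (\<phi> (m, Suc m)) * (\<Prod>x\<in>Rest. g (\<phi> x))"
    unfolding Rest_def by (rule prod.remove[OF finite_Pairs mem])
  also have "\<dots> = g (\<phi> (m, Suc m)) * (\<Prod>x\<in>Rest. g x)"
    by (simp only: R)
  also have "g (\<phi> (m, Suc m)) = - g (m, Suc m)"
    by (simp add: g_def \<phi>_def)
  also have "- g (m, Suc m) * (\<Prod>x\<in>Rest. g x) = - (g (m, Suc m) * (\<Prod>x\<in>Rest. g x))"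
    by simp
  also have "\<dots> = - Vd n a"
    unfolding Vd_def g_def Rest_def by (subst prod.remove[OF finite_Pairs mem]) simp
  finally show ?thesis .
qed

lemma V_div_D:
  assumes inf: "infinite (UNIV::'a::field set)" and s: "\<sigma> permutes {..<k+l}"
  shows "\<exists>R. polyfun (k+l) R \<and> (\<forall>a::nat \<Rightarrow> 'a. Vd (k+l) a = R a * (\<Prod>r<k. \<Prod>r'\<in>{k..<k+l}. (a (\<sigma> r) - a (\<sigma> r'))))"
proof -
  let ?X = "{..<k} \<times> {k..<k+l}"
  have "\<exists>Q. polyfun (k+l) Q \<and> (\<forall>a::nat \<Rightarrow> 'a. Vd (k+l) a = Q a * (\<Prod>x\<in>?X. a (\<sigma> (fst x)) - a (\<sigma> (snd x))))"
  proof (rule iter_division[OF inf])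
    show "finite ?X" by simp
    show "polyfun (k+l) (Vd (k+l))" by (rule Vd_polyfun)
    show "\<forall>x\<in>?X. \<sigma> (fst x) < k + l \<and> \<sigma> (snd x) < k + l \<and> \<sigma> (fst x) \<noteq> \<sigma> (snd x)"
      using perm_lt[OF s] permutes_inj[OF s] by (auto dest: injD)
    show "\<forall>x\<in>?X. \<forall>y\<in>?X. x \<noteq> y \<longrightarrow> {\<sigma> (fst x), \<sigma> (snd x)} \<noteq> {\<sigma> (fst y), \<sigma> (snd y)}"
    proof (intro ballI impI notI)
      fix x y assume x: "x \<in> ?X" and y: "y \<in> ?X" and xy: "x \<noteq> y"
        and e: "{\<sigma> (fst x), \<sigma> (snd x)} = {\<sigma> (fst y), \<sigma> (snd y)}"
      have "{fst x, snd x} = {fst y, snd y}"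
      proof -
        show ?thesis using inj_image_eq_iff[OF permutes_inj[OF s], of "{fst x, snd x}" "{fst y, snd y}"] e by simp
      qed
      then show False using x y xy by (auto simp: doubleton_eq_iff prod_eq_iff)
    qed
    show "\<forall>x\<in>?X. \<forall>a. a (\<sigma> (fst x)) = a (\<sigma> (snd x)) \<longrightarrow> Vd (k + l) (a :: nat \<Rightarrow> 'a) = 0"
    proof (intro ballI allI impI)
      fix x and a :: "nat \<Rightarrow> 'a" assume x: "x \<in> ?X" and e: "a (\<sigma> (fst x)) = a (\<sigma> (snd x))"
      show "Vd (k+l) a = 0"
        by (rule Vd_vanish[where i = "\<sigma> (fst x)" and j = "\<sigma> (snd x)", OF _ _ _ e])
           (use x perm_lt[OF s] inj_eq[OF permutes_inj[OF s]] in auto)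
    qed
  qed
  then show ?thesis by (simp add: prod.cartesian_product case_prod_beta)
qed

lemma finite_shuffles: "finite (shuffles k l)"
  by (rule finite_subset[OF _ finite_permutations[of "{..<k+l}"]]) (auto simp: shuffles_def)

lemma inj_on_perm_comp:
  assumes "inj_on a {..<n}" "\<pi> permutes {..<(n::nat)}"
  shows "inj_on (\<lambda>i. a (\<pi> i)) {..<n}"
proof (rule inj_onI)
  fix x y assume "x \<in> {..<n}" "y \<in> {..<n}" "a (\<pi> x) = a (\<pi> y)"
  then have "\<pi> x = \<pi> y" using assms perm_lt[OF assms(2)] by (auto dest: inj_onD)
  then show "x = y" using permutes_inj[OF assms(2)] by (auto dest: injD)
qed

lemma pf_perm:
  assumes "polyfun n f" "\<pi> permutes {..<(n::nat)}"
  shows "polyfun n (\<lambda>a. f (\<lambda>i. a (\<pi> i)))"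
  by (rule pf_comp[OF assms(1)]) (use perm_lt[OF assms(2)] in \<open>auto intro: pf_var\<close>)

lemma star_exists:
  fixes F G :: "'a::field mpoly"
  assumes inf: "infinite (UNIV::'a set)" and two: "(2::'a) \<noteq> 0"
    and F: "F \<in> Wk k" and G: "G \<in> Wk l"
  shows "\<exists>H\<in>Wk (k+l). \<forall>a. inj_on a {..<k+l} \<longrightarrow> mp_eval H a = (\<Sum>\<sigma>\<in>shuffles k l. Tm F G k l a \<sigma>)"
proof -
  define n where "n = k + l"
  define S where "S a = (\<Sum>\<sigma>\<in>shuffles k l. Tm F G k l a \<sigma>)" for a :: "nat \<Rightarrow> 'a"
  define D where "D \<sigma> a = (\<Prod>r<k. \<Prod>r'\<in>{k..<k+l}. (a (\<sigma> r) - a (\<sigma> r')))" for \<sigma> and a :: "nat \<Rightarrow> 'a"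
  have "\<forall>\<sigma>\<in>shuffles k l. \<exists>R. polyfun (k+l) R \<and> (\<forall>a::nat \<Rightarrow> 'a. Vd (k+l) a = R a * D \<sigma> a)"
    using V_div_D[OF inf shuffle_perm] unfolding D_def by blast
  then obtain RR where RR: "\<And>\<sigma>. \<sigma> \<in> shuffles k l \<Longrightarrow> polyfun n (RR \<sigma>)"
    "\<And>\<sigma> a. \<sigma> \<in> shuffles k l \<Longrightarrow> Vd n a = RR \<sigma> a * D \<sigma> a"
    unfolding n_def by metis
  define N where "N \<sigma> a = mp_eval F (\<lambda>i. a (\<sigma> i)) * mp_eval G (\<lambda>i. a (\<sigma> (i + k))) *
           (\<Prod>r<k. \<Prod>r'\<in>{k..<k+l}. (a (\<sigma> r) - a (\<sigma> r') + 1))" for \<sigma> and a :: "nat \<Rightarrow> 'a"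
  define P where "P a = (\<Sum>\<sigma>\<in>shuffles k l. N \<sigma> a * RR \<sigma> a)" for a
  have NP: "polyfun n (N \<sigma>)" if s: "\<sigma> \<in> shuffles k l" for \<sigma>
  proof -
    have sp: "\<sigma> permutes {..<n}" using shuffle_perm[OF s] by (simp add: n_def)
    have lt: "\<sigma> i < k + l" if "i < k + l" for i using perm_lt[OF sp] that by (simp add: n_def)
    have "polyfun n (\<lambda>a. mp_eval F (\<lambda>i. a (\<sigma> i)))"
      by (rule pf_comp[OF mp_eval_polyfun[OF Wk_keys_in[OF F]]]) (auto intro!: pf_var lt simp: n_def)
    moreover have "polyfun n (\<lambda>a. mp_eval G (\<lambda>i. a (\<sigma> (i + k))))"
      by (rule pf_comp[OF mp_eval_polyfun[OF Wk_keys_in[OF G]]]) (auto intro!: pf_var lt simp: n_def)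
    moreover have "polyfun n (\<lambda>a. \<Prod>r<k. \<Prod>r'\<in>{k..<k+l}. (a (\<sigma> r) - a (\<sigma> r') + 1))"
      by (intro pf_prod pf_add pf_diff pf_var pf_const) (auto simp: n_def intro!: lt)
    ultimately show ?thesis unfolding N_def by (intro pf_mult)
  qed
  have PP: "polyfun n P" unfolding P_def by (intro pf_sum pf_mult NP RR)
  have Dnz: "D \<sigma> a \<noteq> 0" if s: "\<sigma> \<in> shuffles k l" and a: "inj_on a {..<n}" for \<sigma> a
  proof -
    have sp: "\<sigma> permutes {..<n}" using shuffle_perm[OF s] by (simp add: n_def)
    have "a (\<sigma> r) - a (\<sigma> r') \<noteq> 0" if "r < k" "r' \<in> {k..<k+l}" for r r'
    proof
      assume "a (\<sigma> r) - a (\<sigma> r') = 0"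
      then have "a (\<sigma> r) = a (\<sigma> r')" by simp
      moreover have "\<sigma> r < n" "\<sigma> r' < n" using that perm_lt[OF sp] by (auto simp: n_def)
      ultimately have "\<sigma> r = \<sigma> r'" using a by (auto dest: inj_onD)
      then have "r = r'" using permutes_inj[OF sp] by (auto dest: injD)
      then show False using that by simp
    qed
    then show ?thesis unfolding D_def by (simp add: prod_zero_iff)
  qed
  have PS: "P a = S a * Vd n a" if a: "inj_on a {..<n}" for a
  proof -
    have "Tm F G k l a \<sigma> * Vd n a = N \<sigma> a * RR \<sigma> a" if s: "\<sigma> \<in> shuffles k l" for \<sigma>
    proof -
      have split: "(\<Prod>r<k. \<Prod>r'\<in>{k..<k+l}. (a (\<sigma> r) - a (\<sigma> r') + 1) / (a (\<sigma> r) - a (\<sigma> r')))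
          = (\<Prod>r<k. \<Prod>r'\<in>{k..<k+l}. (a (\<sigma> r) - a (\<sigma> r') + 1)) / D \<sigma> a"
        unfolding D_def by (simp add: prod_dividef)
      show ?thesis
        unfolding Tm_def split RR(2)[OF s, of a] N_def using Dnz[OF s a] by (simp add: field_simps)
    qed
    then show ?thesis unfolding P_def S_def sum_distrib_right by (intro sum.cong) auto
  qed
  have Ssym: "S (\<lambda>i. a (\<pi> i)) = S a" if "\<pi> permutes {..<n}" for \<pi> a
    unfolding S_def by (rule shuffle_sum_sym[OF F G]) (use that in \<open>simp add: n_def\<close>)
  have Panti: "P (\<lambda>i. a (transpose m (Suc m) i)) = - P a" if m: "Suc m < n" for m a
  proof -
    let ?t = "transpose m (Suc m)"
    have tp: "?t permutes {..<n}" by (rule permutes_swap_id) (use m in auto)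
    have "P (\<lambda>i. a (?t i)) + P a = 0"
    proof (rule density[OF inf, of n "\<lambda>a. P (\<lambda>i. a (?t i)) + P a"])
      show "polyfun n (\<lambda>a. P (\<lambda>i. a (?t i)) + P a)" by (intro pf_add pf_perm[OF PP tp] PP)
      fix a :: "nat \<Rightarrow> 'a" assume a: "inj_on a {..<n}"
      have a': "inj_on (\<lambda>i. a (?t i)) {..<n}" by (rule inj_on_perm_comp[OF a tp])
      have "P (\<lambda>i. a (?t i)) = S (\<lambda>i. a (?t i)) * Vd n (\<lambda>i. a (?t i))" by (rule PS[OF a'])
      also have "\<dots> = S a * (- Vd n a)" by (simp add: Ssym[OF tp] Vd_swap[OF m])
      also have "\<dots> = - P a" by (simp add: PS[OF a])
      finally show "P (\<lambda>i. a (?t i)) + P a = 0" by simp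
    qed
    then show ?thesis by (simp add: eq_neg_iff_add_eq_0)
  qed
  have adj: "P a = 0" if m: "Suc m < n" and e: "a m = a (Suc m)" for m a
  proof -
    have "(\<lambda>i. a (transpose m (Suc m) i)) = a"
      by (rule ext) (simp add: transpose_def e)
    then have "P a = - P a" using Panti[OF m, of a] by simp
    then have "2 * P a = 0" by simp
    then show ?thesis using two by simp
  qed
  have gen: "\<forall>i (a::nat \<Rightarrow> 'a). i + d + 1 < n \<longrightarrow> a i = a (i + d + 1) \<longrightarrow> P a = 0" for d
  proof (induction d)
    case 0 then show ?case using adj by auto
  next
    case (Suc d)
    show ?case
    proof (intro allI impI)
      fix i and a :: "nat \<Rightarrow> 'a" assume lt: "i + Suc d + 1 < n" and e: "a i = a (i + Suc d + 1)"
      define b where "b j = a (transpose (i + d + 1) (Suc (i + d + 1)) j)" for j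
      have bi: "b i = a i" "b (i + d + 1) = a (i + Suc d + 1)" by (simp_all add: b_def transpose_def)
      have "i + d + 1 < n" using lt by simp
      moreover have "b i = b (i + d + 1)" using bi e by simp
      ultimately have "P b = 0" using Suc.IH by blast
      moreover have "P b = - P a" unfolding b_def by (rule Panti) (use lt in simp)
      ultimately show "P a = 0" by simp
    qed
  qed
  have Pvan: "P a = 0" if "x \<in> Pairs n" "a (fst x) = a (snd x)" for x a
  proof -
    have "fst x + (snd x - fst x - 1) + 1 < n" "a (fst x) = a (fst x + (snd x - fst x - 1) + 1)"
      using that by (auto simp: Pairs_def)
    then show ?thesis using gen by blast
  qed
  obtain Q where Q: "polyfun n Q" "\<forall>a. P a = Q a * (\<Prod>x\<in>Pairs n. a (fst x) - a (snd x))"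
  proof -
    have "\<exists>Q. polyfun n Q \<and> (\<forall>a. P a = Q a * (\<Prod>x\<in>Pairs n. a (fst x) - a (snd x)))"
    proof (rule iter_division[OF inf finite_Pairs PP])
      show "\<forall>x\<in>Pairs n. fst x < n \<and> snd x < n \<and> fst x \<noteq> snd x" by (auto simp: Pairs_def)
      show "\<forall>x\<in>Pairs n. \<forall>y\<in>Pairs n. x \<noteq> y \<longrightarrow> {fst x, snd x} \<noteq> {fst y, snd y}"
        by (auto simp: Pairs_def doubleton_eq_iff prod_eq_iff)
      show "\<forall>x\<in>Pairs n. \<forall>a. a (fst x) = a (snd x) \<longrightarrow> P a = 0" using Pvan by blast
    qed
    then show ?thesis using that by blast
  qed
  have QV: "P a = Q a * Vd n a" for a using Q(2) by (simp add: Vd_def)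
  have QS: "Q a = S a" if a: "inj_on a {..<n}" for a
    using PS[OF a] QV[of a] Vd_nonzero[OF a] by simp
  have Qsym: "Q (\<lambda>i. a (\<pi> i)) = Q a" if p: "\<pi> permutes {..<n}" for \<pi> a
  proof -
    have "Q (\<lambda>i. a (\<pi> i)) - Q a = 0"
    proof (rule density[OF inf, of n "\<lambda>a. Q (\<lambda>i. a (\<pi> i)) - Q a"])
      show "polyfun n (\<lambda>a. Q (\<lambda>i. a (\<pi> i)) - Q a)" by (intro pf_diff pf_perm[OF Q(1) p] Q(1))
      fix a :: "nat \<Rightarrow> 'a" assume a: "inj_on a {..<n}"
      show "Q (\<lambda>i. a (\<pi> i)) - Q a = 0"
        using QS[OF a] QS[OF inj_on_perm_comp[OF a p]] Ssym[OF p] by simp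
    qed
    then show ?thesis by simp
  qed
  obtain H where H: "H \<in> Wk n" "\<forall>a. mp_eval H a = Q a" using exists_Wk[OF inf Q(1) Qsym] by blast
  show ?thesis
  proof (rule bexI[of _ H])
    show "H \<in> Wk (k+l)" using H(1) by (simp add: n_def)
    show "\<forall>a. inj_on a {..<k + l} \<longrightarrow> mp_eval H a = (\<Sum>\<sigma>\<in>shuffles k l. Tm F G k l a \<sigma>)"
      using H(2) QS unfolding S_def n_def by simp
  qed
qed

lemma star_prop:
  fixes F G :: "'a::field mpoly"
  assumes inf: "infinite (UNIV::'a set)" and two: "(2::'a) \<noteq> 0"
    and F: "F \<in> Wk k" and G: "G \<in> Wk l"
  shows "star k l F G \<in> Wk (k+l) \<and>
    (\<forall>a. inj_on a {..<k+l} \<longrightarrow> mp_eval (star k l F G) a = (\<Sum>\<sigma>\<in>shuffles k l. Tm F G k l a \<sigma>))"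
proof -
  obtain H where H: "H \<in> Wk (k+l)" "\<forall>a. inj_on a {..<k+l} \<longrightarrow> mp_eval H a = (\<Sum>\<sigma>\<in>shuffles k l. Tm F G k l a \<sigma>)"
    using star_exists[OF inf two F G] by blast
  have eq: "star k l F G = (THE H. H \<in> Wk (k+l) \<and>
     (\<forall>a. inj_on a {..<k+l} \<longrightarrow> mp_eval H a = (\<Sum>\<sigma>\<in>shuffles k l. Tm F G k l a \<sigma>)))"
    unfolding star_def Tm_def by (rule refl)
  have "star k l F G = H"
    unfolding eq
  proof (rule the_equality)
    show "H \<in> Wk (k+l) \<and> (\<forall>a. inj_on a {..<k+l} \<longrightarrow> mp_eval H a = (\<Sum>\<sigma>\<in>shuffles k l. Tm F G k l a \<sigma>))"
      using H by blast
    fix H' assume H': "H' \<in> Wk (k+l) \<and> (\<forall>a. inj_on a {..<k+l} \<longrightarrow> mp_eval H' a = (\<Sum>\<sigma>\<in>shuffles k l. Tm F G k l a \<sigma>))"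
    show "H' = H"
      by (rule Wk_unique[OF inf Wk_keys_in Wk_keys_in]) (use H H' in auto)
  qed
  then show ?thesis using H by simp
qed

lemma alg_closed_infinite: "infinite (UNIV :: 'a::alg_closed_field set)"
proof
  assume fin: "finite (UNIV :: 'a set)"
  define P where "P = (\<Prod>x\<in>(UNIV::'a set). [:-x, 1:])"
  define q where "q = P + 1"
  have dP: "degree P = card (UNIV::'a set)"
    unfolding P_def by (subst degree_prod_eq_sum_degree) auto
  have "card (UNIV::'a set) > 0" using fin by (simp add: card_gt_0_iff)
  then have "degree q > 0" unfolding q_def using dP by (simp add: degree_add_eq_left)
  then obtain x where x: "poly q x = 0" using alg_closed_imp_poly_has_root by blast
  have "poly P x = 0" unfolding P_def poly_prod
    by (rule prod_zero[OF fin]) (rule bexI[of _ x], simp_all)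
  then show False using x by (simp add: q_def)
qed

definition Jp :: "nat \<Rightarrow> nat \<Rightarrow> 'a::field mpoly set" where
  "Jp p k = {f \<in> Wk k. \<forall>a \<iota>. inj_on \<iota> {..<p} \<and> \<iota> ` {..<p} \<subseteq> {..<k} \<and>
      (\<forall>j<p. a (\<iota> j) + of_nat j = a (\<iota> 0)) \<longrightarrow> mp_eval f a = 0}"

lemma zero_Wk: "0 \<in> Wk k"
  by (simp add: Wk_def)

lemma add_Wk: "f \<in> Wk k \<Longrightarrow> g \<in> Wk k \<Longrightarrow> f + g \<in> Wk k"
proof -
  assume f: "f \<in> Wk k" and g: "g \<in> Wk k"
  show "f + g \<in> Wk k"
    unfolding Wk_def
  proof (intro CollectI conjI allI impI ballI)
    fix m assume "m \<in> Poly_Mapping.keys (f + g)"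
    then have "m \<in> Poly_Mapping.keys f \<union> Poly_Mapping.keys g" using keys_add[of f g] by blast
    then show "Poly_Mapping.keys m \<subseteq> {..<k}" using f g unfolding Wk_def by blast
  next
    fix \<sigma> and m m' :: "nat \<Rightarrow>\<^sub>0 nat"
    assume "\<sigma> permutes {..<k}" "\<forall>i. Poly_Mapping.lookup m' (\<sigma> i) = Poly_Mapping.lookup m i"
    then have "Poly_Mapping.lookup f m' = Poly_Mapping.lookup f m" "Poly_Mapping.lookup g m' = Poly_Mapping.lookup g m"
      using f g unfolding Wk_def by blast+
    then show "Poly_Mapping.lookup (f + g) m' = Poly_Mapping.lookup (f + g) m" by (simp add: lookup_add)
  qed
qed

lemma lookup_scale: "Poly_Mapping.lookup (Poly_Mapping.map ((*) (c::'a::field)) f) m = c * Poly_Mapping.lookup f m"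
  by (simp add: map.rep_eq when_def)

lemma keys_scale: "Poly_Mapping.keys (Poly_Mapping.map ((*) (c::'a::field)) f) \<subseteq> Poly_Mapping.keys f"
  by (auto simp: in_keys_iff lookup_scale)

lemma scale_Wk: "f \<in> Wk k \<Longrightarrow> Poly_Mapping.map ((*) (c::'a::field)) f \<in> Wk k"
  unfolding Wk_def using keys_scale[of c f] by (auto simp: lookup_scale)

lemma mp_eval_scale: "mp_eval (Poly_Mapping.map ((*) (c::'a::field)) f) a = c * mp_eval f a"
proof -
  have "mp_eval (Poly_Mapping.map ((*) c) f) a = (\<Sum>m\<in>Poly_Mapping.keys f. Poly_Mapping.lookup (Poly_Mapping.map ((*) c) f) m * monval m a)"
    by (rule mp_eval_superset[OF finite_keys keys_scale])
  also have "\<dots> = c * mp_eval f a" by (simp add: lookup_scale mp_eval_monval sum_distrib_left mult_ac)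
  finally show ?thesis .
qed

lemma zero_Jp: "0 \<in> Jp p k"
  by (simp add: Jp_def zero_Wk)

lemma add_Jp: "f \<in> Jp p k \<Longrightarrow> g \<in> Jp p k \<Longrightarrow> f + g \<in> Jp p k"
  unfolding Jp_def by (auto simp: add_Wk mp_eval_add)

lemma sum_Jp: "(\<And>x. x \<in> X \<Longrightarrow> f x \<in> Jp p k) \<Longrightarrow> sum f X \<in> Jp p k"
proof (induction X rule: infinite_finite_induct)
  case (insert x F) then show ?case by (simp add: add_Jp)
qed (simp_all add: zero_Jp)

lemma scale_Jp: "f \<in> Jp p k \<Longrightarrow> Poly_Mapping.map ((*) (c::'a::field)) f \<in> Jp p k"
  unfolding Jp_def by (auto simp: scale_Wk mp_eval_scale)

lemma small_Jp: "k < p \<Longrightarrow> f \<in> Wk k \<Longrightarrow> f \<in> Jp p k"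
  unfolding Jp_def
proof (intro CollectI conjI allI impI)
  fix a :: "nat \<Rightarrow> 'a" and \<iota> assume k: "k < p" and h: "inj_on \<iota> {..<p} \<and> \<iota> ` {..<p} \<subseteq> {..<k} \<and> (\<forall>j<p. a (\<iota> j) + of_nat j = a (\<iota> 0))"
  then have "card {..<p} \<le> card {..<k}" by (intro card_inj_on_le) auto
  then show "mp_eval f a = 0" using k by simp
qed

lemma Wk_small:
  assumes n: "n \<le> 1" and kn: "keys_in n f"
  shows "f \<in> Wk n"
  unfolding Wk_def
proof (intro CollectI conjI allI impI)
  show "\<forall>m\<in>Poly_Mapping.keys f. Poly_Mapping.keys m \<subseteq> {..<n}" using kn by (simp add: keys_in_def)
  fix \<sigma> and m m' :: "nat \<Rightarrow>\<^sub>0 nat"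
  assume s: "\<sigma> permutes {..<n}" and mm: "\<forall>i. Poly_Mapping.lookup m' (\<sigma> i) = Poly_Mapping.lookup m i"
  have "\<sigma> i = i" for i
  proof (cases "i < n")
    case True
    then have "\<sigma> i < n" using perm_lt[OF s] by simp
    then show ?thesis using True n by simp
  next
    case False then show ?thesis using permutes_not_in[OF s] by simp
  qed
  then have "m' = m" using mm by (intro poly_mapping_eqI) simp
  then show "Poly_Mapping.lookup f m' = Poly_Mapping.lookup f m" by simp
qed

lemma cyc_down:
  assumes step: "\<forall>j<p. Q j \<longrightarrow> Q (if j = 0 then p - 1 else j - 1)" and m: "Q m" "m < (p::nat)"
  shows "\<forall>d\<le>m. Q (m - d)"
proof (intro allI impI)
  fix d assume "d \<le> m"
  then show "Q (m - d)"
  proof (induction d)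
    case 0 then show ?case using m by simp
  next
    case (Suc d)
    then have "Q (m - d)" "m - d < p" "m - d \<noteq> 0" using m by auto
    then have "Q (m - d - 1)" using step by fastforce
    then show ?case by simp
  qed
qed

lemma cyc:
  fixes p :: nat
  assumes "Q j1" "j1 < p" "\<not> Q j2" "j2 < p"
  shows "\<exists>j<p. Q j \<and> \<not> Q (if j = 0 then p - 1 else j - 1)"
proof (rule ccontr)
  assume "\<not> ?thesis"
  then have step: "\<forall>j<p. Q j \<longrightarrow> Q (if j = 0 then p - 1 else j - 1)" by blast
  have "Q 0" using cyc_down[OF step assms(1,2)] by (metis diff_self_eq_0 order_refl)
  then have "Q (p - 1)" using step assms(2) by fastforce
  then have "\<forall>d\<le>p-1. Q (p - 1 - d)" by (rule cyc_down[OF step]) (use assms(2) in simp)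
  then have "Q (p - 1 - (p - 1 - j2))" by simp
  then show False using assms(3,4) by simp
qed

lemma chain_val:
  fixes a :: "nat \<Rightarrow> 'a::field"
  assumes ch: "\<forall>j<p. a (\<iota> j) + of_nat j = a (\<iota> 0)" and j: "j < p" and p0: "of_nat p = (0::'a)"
  shows "a (\<iota> j) - a (\<iota> (if j = 0 then p - 1 else j - 1)) + 1 = 0"
proof (cases "j = 0")
  case True
  have p1: "p - 1 < p" using j by simp
  have A: "a (\<iota> (p - 1)) = a (\<iota> 0) - of_nat (p - 1)" using ch p1 by (metis add_diff_cancel_right')
  have "of_nat (p - 1) + 1 = (of_nat p :: 'a)" using j by (metis Suc_diff_1 gr_implies_not0 neq0_conv of_nat_Suc add.commute)
  then have B: "(of_nat (p - 1) :: 'a) = - 1" using p0 by (simp add: eq_neg_iff_add_eq_0)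
  show ?thesis using True A B by simp
next
  case False
  have E1: "a (\<iota> j) = a (\<iota> 0) - of_nat j" using ch j by (metis add_diff_cancel_right')
  have E2: "a (\<iota> (j - 1)) = a (\<iota> 0) - of_nat (j - 1)" using ch j by (metis add_diff_cancel_right' less_imp_diff_less)
  have E3: "(of_nat j :: 'a) = of_nat (j - 1) + 1" using False by (metis Suc_diff_1 neq0_conv of_nat_Suc add.commute)
  have R: "(x - (y + 1)) - (x - y) + 1 = (0::'a)" for x y :: 'a by (simp add: algebra_simps)
  have "a (\<iota> j) - a (\<iota> (j - 1)) + 1 = 0" unfolding E1 E2 E3 by (rule R)
  then show ?thesis using False by simp
qed

lemma Jp_D:
  assumes "f \<in> Jp p k" "inj_on \<iota> {..<p}" "\<iota> ` {..<p} \<subseteq> {..<k}" "\<forall>j<p. a (\<iota> j) + of_nat j = a (\<iota> 0)"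
  shows "mp_eval f a = 0"
  using assms unfolding Jp_def by blast

lemma term_zero:
  fixes F G :: "'a::field mpoly"
  assumes F: "F \<in> Jp p k" and G: "G \<in> Jp p l" and s: "\<sigma> \<in> shuffles k l"
    and a: "inj_on a {..<k+l}"
    and \<iota>: "inj_on \<iota> {..<p}" "\<iota> ` {..<p} \<subseteq> {..<k+l}" and ch: "\<forall>j<p. a (\<iota> j) + of_nat j = a (\<iota> 0)"
    and p0: "of_nat p = (0::'a)" and pp: "0 < p"
  shows "Tm F G k l a \<sigma> = 0"
proof -
  have sp: "\<sigma> permutes {..<k+l}" by (rule shuffle_perm[OF s])
  let ?A = "\<sigma> ` {..<k}"
  have ij: "\<iota> j < k + l" if "j < p" for j using \<iota>(2) that by auto
  have inv_in: "inv \<sigma> (\<iota> j) < k" if "j < p" "\<iota> j \<in> ?A" for j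
    using that permutes_inverses(2)[OF sp] by auto
  have inv_out: "k \<le> inv \<sigma> (\<iota> j) \<and> inv \<sigma> (\<iota> j) < k + l" if "j < p" "\<iota> j \<notin> ?A" for j
  proof -
    have "\<iota> j \<in> \<sigma> ` {k..<k+l}" using perm_split_image[OF sp] ij[OF that(1)] that(2) by auto
    then show ?thesis using permutes_inverses(2)[OF sp] by auto
  qed
  have sinv: "\<sigma> (inv \<sigma> x) = x" for x by (rule permutes_inverses(1)[OF sp])
  have iinj: "inj (inv \<sigma>)" by (rule perm_inj_inv[OF sp])
  consider (allin) "\<forall>j<p. \<iota> j \<in> ?A" | (allout) "\<forall>j<p. \<iota> j \<notin> ?A"
    | (mixed) j where "j < p" "\<iota> j \<in> ?A" "\<iota> (if j = 0 then p - 1 else j - 1) \<notin> ?A"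
    using cyc[of "\<lambda>j. \<iota> j \<in> ?A"] by blast
  then show ?thesis
  proof cases
    case allin
    have "mp_eval F (\<lambda>i. a (\<sigma> i)) = 0"
    proof -
      have "inj_on (\<lambda>j. inv \<sigma> (\<iota> j)) {..<p}"
        using \<iota>(1) iinj by (auto simp: inj_on_def dest: injD)
      moreover have "(\<lambda>j. inv \<sigma> (\<iota> j)) ` {..<p} \<subseteq> {..<k}" using inv_in allin by auto
      moreover have "\<forall>j<p. (\<lambda>i. a (\<sigma> i)) (inv \<sigma> (\<iota> j)) + of_nat j = (\<lambda>i. a (\<sigma> i)) (inv \<sigma> (\<iota> 0))"
        using ch by (simp add: sinv)
      ultimately show ?thesis by (rule Jp_D[where a = "\<lambda>i. a (\<sigma> i)" and \<iota> = "\<lambda>j. inv \<sigma> (\<iota> j)", OF F])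
    qed
    then show ?thesis by (simp add: Tm_def)
  next
    case allout
    have "mp_eval G (\<lambda>i. a (\<sigma> (i + k))) = 0"
    proof -
      have "inj_on (\<lambda>j. inv \<sigma> (\<iota> j) - k) {..<p}"
      proof (rule inj_onI)
        fix x y assume x: "x \<in> {..<p}" and y: "y \<in> {..<p}" and e: "inv \<sigma> (\<iota> x) - k = inv \<sigma> (\<iota> y) - k"
        have "inv \<sigma> (\<iota> x) = inv \<sigma> (\<iota> y)" using e inv_out[of x] inv_out[of y] x y allout by auto
        then have "\<iota> x = \<iota> y" using iinj by (auto dest: injD)
        then show "x = y" using \<iota>(1) x y by (auto dest: inj_onD)
      qed
      moreover have "(\<lambda>j. inv \<sigma> (\<iota> j) - k) ` {..<p} \<subseteq> {..<l}" using inv_out allout by force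
      moreover have "\<forall>j<p. (\<lambda>i. a (\<sigma> (i + k))) (inv \<sigma> (\<iota> j) - k) + of_nat j = (\<lambda>i. a (\<sigma> (i + k))) (inv \<sigma> (\<iota> 0) - k)"
      proof (intro allI impI)
        fix j assume j: "j < p"
        have e1: "inv \<sigma> (\<iota> j) - k + k = inv \<sigma> (\<iota> j)" using inv_out[OF j] allout j by auto
        have e2: "inv \<sigma> (\<iota> 0) - k + k = inv \<sigma> (\<iota> 0)" using inv_out[of 0] allout pp by auto
        show "(\<lambda>i. a (\<sigma> (i + k))) (inv \<sigma> (\<iota> j) - k) + of_nat j = (\<lambda>i. a (\<sigma> (i + k))) (inv \<sigma> (\<iota> 0) - k)"
          using ch j by (simp add: e1 e2 sinv)
      qed
      ultimately show ?thesis by (rule Jp_D[where a = "\<lambda>i. a (\<sigma> (i + k))" and \<iota> = "\<lambda>j. inv \<sigma> (\<iota> j) - k", OF G])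
    qed
    then show ?thesis by (simp add: Tm_def)
  next
    case mixed
    define j' where "j' = (if j = 0 then p - 1 else j - 1)"
    have j'p: "j' < p" using mixed(1) less_imp_diff_less by (auto simp: j'_def)
    define r where "r = inv \<sigma> (\<iota> j)"
    define r' where "r' = inv \<sigma> (\<iota> j')"
    have r: "r < k" using inv_in[OF mixed(1,2)] by (simp add: r_def)
    have r': "r' \<in> {k..<k+l}" using inv_out[OF j'p] mixed(3) by (simp add: r'_def j'_def)
    have "a (\<sigma> r) - a (\<sigma> r') + 1 = 0"
      using chain_val[where a = a and \<iota> = \<iota>, OF ch mixed(1) p0] by (simp add: r_def r'_def sinv j'_def)
    then have "(\<Prod>r'\<in>{k..<k+l}. (a (\<sigma> r) - a (\<sigma> r') + 1) / (a (\<sigma> r) - a (\<sigma> r'))) = 0"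
      by (intro prod_zero) (use r' in auto)
    then have "(\<Prod>r<k. \<Prod>r'\<in>{k..<k+l}. (a (\<sigma> r) - a (\<sigma> r') + 1) / (a (\<sigma> r) - a (\<sigma> r'))) = 0"
      by (intro prod_zero) (use r in auto)
    then show ?thesis by (simp add: Tm_def)
  qed
qed

lemma chain_inj:
  fixes a :: "nat \<Rightarrow> 'a::field"
  assumes ch: "\<forall>j<p. a (\<iota> j) + of_nat j = a (\<iota> 0)" and \<iota>: "inj_on \<iota> {..<p}"
    and char: "\<And>n. (of_nat n :: 'a) = 0 \<longleftrightarrow> p dvd n"
  shows "inj_on a (\<iota> ` {..<p})"
proof (rule inj_onI)
  fix x y assume "x \<in> \<iota> ` {..<p}" "y \<in> \<iota> ` {..<p}" and e: "a x = a y"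
  then obtain i j where ij: "i < p" "j < p" "x = \<iota> i" "y = \<iota> j" by auto
  have "a (\<iota> i) + of_nat i = a (\<iota> j) + of_nat j" using ch ij by simp
  then have eq: "(of_nat i :: 'a) = of_nat j" using e ij by simp
  have "i = j"
  proof (rule ccontr)
    assume "i \<noteq> j"
    then consider "i < j" | "j < i" by linarith
    then show False
    proof cases
      case 1
      then have "(of_nat (j - i) :: 'a) = 0" using eq by (simp add: of_nat_diff)
      then have "p dvd (j - i)" using char by blast
      then show False using 1 ij by (auto dest: dvd_imp_le)
    next
      case 2
      then have "(of_nat (i - j) :: 'a) = 0" using eq by (simp add: of_nat_diff)
      then have "p dvd (i - j)" using char by blast
      then show False using 2 ij by (auto dest: dvd_imp_le)
    qed
  qed
  then show "x = y" using ij by simp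
qed

lemma star_Jp:
  fixes F G :: "'a::field mpoly"
  assumes inf: "infinite (UNIV::'a set)" and two: "(2::'a) \<noteq> 0"
    and char: "\<And>n. (of_nat n :: 'a) = 0 \<longleftrightarrow> p dvd n" and pp: "0 < p"
    and F: "F \<in> Jp p k" and G: "G \<in> Jp p l"
  shows "star k l F G \<in> Jp p (k+l)"
proof -
  have FW: "F \<in> Wk k" and GW: "G \<in> Wk l" using F G by (simp_all add: Jp_def)
  have SP: "star k l F G \<in> Wk (k+l)"
     "\<And>a. inj_on a {..<k+l} \<Longrightarrow> mp_eval (star k l F G) a = (\<Sum>\<sigma>\<in>shuffles k l. Tm F G k l a \<sigma>)"
    using star_prop[OF inf two FW GW] by blast+
  have p0: "of_nat p = (0::'a)" using char by simp
  show ?thesis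
    unfolding Jp_def
  proof (intro CollectI conjI allI impI SP(1))
    fix a :: "nat \<Rightarrow> 'a" and \<iota> assume h: "inj_on \<iota> {..<p} \<and> \<iota> ` {..<p} \<subseteq> {..<k+l} \<and> (\<forall>j<p. a (\<iota> j) + of_nat j = a (\<iota> 0))"
    let ?R = "{..<k+l} - \<iota> ` {..<p}"
    have pf: "polyfun (k+l) (mp_eval (star k l F G))"
      by (rule mp_eval_polyfun[OF Wk_keys_in[OF SP(1)]])
    show "mp_eval (star k l F G) a = 0"
    proof (rule density_gen[OF inf pf, of ?R a a])
      show "finite ?R" by simp
      have "{..<k+l} - ?R = \<iota> ` {..<p}" using h by auto
      then show "inj_on a ({..<k+l} - ?R)" using chain_inj[of p a \<iota>] h char by simp
      show "\<forall>a'. (\<forall>i. i \<notin> ?R \<longrightarrow> a' i = a i) \<and> inj_on a' {..<k+l} \<longrightarrow> mp_eval (star k l F G) a' = 0"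
      proof (intro allI impI)
        fix a' assume a': "(\<forall>i. i \<notin> ?R \<longrightarrow> a' i = a i) \<and> inj_on a' {..<k+l}"
        have agree: "a' (\<iota> j) = a (\<iota> j)" if "j < p" for j using a' that by auto
        have ch': "\<forall>j<p. a' (\<iota> j) + of_nat j = a' (\<iota> 0)" using h agree pp by simp
        have "mp_eval (star k l F G) a' = (\<Sum>\<sigma>\<in>shuffles k l. Tm F G k l a' \<sigma>)" using SP(2) a' by blast
        also have "\<dots> = 0"
          by (rule sum.neutral) (use term_zero[where a = a' and \<iota> = \<iota>, OF F G _ _ _ _ ch' p0 pp] a' h in blast)
        finally show "mp_eval (star k l F G) a' = 0" .
      qed
    qed simp
  qed
qed

theorem proposition3p1:
  fixes p :: nat
  assumes "CHAR('a::alg_closed_field) = p" and "prime p" and "p > 2"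
  shows "\<forall>k. \<forall>w \<in> (imPsi :: (nat \<Rightarrow> 'a mpoly) set).
           (\<forall>n. n \<noteq> k \<longrightarrow> w n = 0) \<longrightarrow> w k \<in> Jk p k"
proof -
  have inf: "infinite (UNIV::'a set)" by (rule alg_closed_infinite)
  have char: "(of_nat n :: 'a) = 0 \<longleftrightarrow> p dvd n" for n
    using assms(1) by (simp add: of_nat_eq_0_iff_char_dvd)
  have pp: "0 < p" using assms(3) by simp
  have two: "(2::'a) \<noteq> 0"
  proof
    assume "(2::'a) = 0"
    then have "(of_nat 2 :: 'a) = 0" by simp
    then have "p dvd 2" using char by blast
    then show False using assms(3) by (auto dest: dvd_imp_le)
  qed
  have main: "\<forall>n. w n \<in> Jp p n" if "w \<in> imPsi" for w :: "nat \<Rightarrow> 'a mpoly"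
    using that
  proof (induction rule: imPsi.induct)
    case (gen r)
    show ?case
    proof
      fix n
      show "Psi_gen r n \<in> (Jp p n :: 'a mpoly set)"
      proof (cases "n = 1")
        case True
        have "mp_x0pow r \<in> (Wk 1 :: 'a mpoly set)"
          by (rule Wk_small) (auto simp: keys_in_def mp_x0pow_def)
        moreover have "(1::nat) < p" using assms(3) by simp
        ultimately have "mp_x0pow r \<in> (Jp p 1 :: 'a mpoly set)" by (intro small_Jp)
        then show ?thesis using True by (simp add: Psi_gen_def)
      next
        case False then show ?thesis by (simp add: Psi_gen_def zero_Jp)
      qed
    qed
  next
    case one
    show ?case
    proof
      fix n
      show "Wone n \<in> (Jp p n :: 'a mpoly set)"
      proof (cases "n = 0")
        case True
        have "mp_const (1::'a) \<in> Wk 0" by (rule Wk_small) (auto simp: keys_in_def mp_const_def)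
        then show ?thesis using True pp by (simp add: Wone_def small_Jp)
      next
        case False then show ?thesis by (simp add: Wone_def zero_Jp)
      qed
    qed
  next
    case (add w v) then show ?case by (simp add: add_Jp)
  next
    case (scale w c) then show ?case by (simp add: Wscale_def scale_Jp)
  next
    case (mult w v)
    show ?case
    proof
      fix n
      show "Wmult w v n \<in> Jp p n"
        unfolding Wmult_def
      proof (rule sum_Jp)
        fix k assume k: "k \<in> {..n}"
        have "star k (n - k) (w k) (v (n - k)) \<in> Jp p (k + (n - k))"
          using star_Jp[OF inf two char pp] mult by blast
        then show "star k (n - k) (w k) (v (n - k)) \<in> Jp p n" using k by simp
      qed
    qed
  qed
  show ?thesis
  proof (intro allI ballI impI)
    fix k and w :: "nat \<Rightarrow> 'a mpoly" assume w: "w \<in> imPsi"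
    have J: "w k \<in> Jp p k" using main[OF w] by blast
    show "w k \<in> Jk p k"
      unfolding Jk_def
    proof (intro CollectI conjI impI allI)
      show "w k \<in> Wk k" using J by (simp add: Jp_def)
      fix a :: "nat \<Rightarrow> 'a" assume pk: "p \<le> k" and ch: "\<forall>i<p. a i + of_nat i = a 0"
      show "mp_eval (w k) a = 0"
        by (rule Jp_D[where \<iota> = id, OF J]) (use pk ch in auto)
    qed
  qed
qed

end
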